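(* Let $G$ be a stochastic game with generalized-reachability objective $\mathcal T$ of dimension $n$, let $(L_i,U_i)=\overline{\mathfrak B}^{\,i}(L_0,U_0)$ be the sequence computed by Multi-Objective Bounded Value Iteration, and let $L_\infty(s)=\bigcup_{i\ge0}L_i(s)$. Then for all states $s\in S$ and all directions $\mathbf d\in\mathsf D$, $L_\infty(s)[\mathbf d]=\mathfrak A(s)[\mathbf d]$.
   Context: Stochastic game $G=(S,S_\Box,S_\circ,s_0,A,\mathrm{Av},\delta)$: finite state set $S$ partitioned into Maximizer states $S_\Box$ and Minimizer states $S_\circ$, initial state $s_0$, finite action set $A$, nonempty $\mathrm{Av}(s)$, transition distributions $\delta(s,a)$. Strategies history-dependent randomized; $\mathbb P^{\sigma,\tau}_s$ measure on infinite paths from $s$. Objective $\mathcal T=(T_1,\dots,T_n)$; $\mathfrak A(s)$ = set of $\vec v\in\mathbb R^n_{\ge0}$ such that some Maximizer strategy $\sigma$ gives $\mathbb P^{\sigma,\tau}_s(\Diamond T_i)\ge\vec v_i$ for all Minimizer $\tau$ and all $i$. Geometry: $\mathit{dwc}(X)=\{y\in\mathbb R^n_{\ge0}\mid\exists x\in X:y\le x\}$; $\mathbf 1=\mathit{dwc}(\{\vec1\})$; scaling, Minkowski sum, $\mathrm{conv}$. Directions $[\vec v]=\{\lambda\vec v\mid\lambda>0\}$; $\mathsf D$ = directions of $\vec v\in[0,1]^n\setminus\{\vec0\}$; $X[\mathbf d]=\sup\{\|\vec x\|\mid\vec x\in X,[\vec x]=\mathbf d\}$, $\sup\emptyset=0$.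 Regions are subsets of $\mathsf D$, identified with the points whose direction lies in them. $f(s,a):=\big(\mathit{dwc}(\{\mathbb 1_{\mathcal T}(s)\})+\sum_{s'}\delta(s,a)(s')\cdot f(s')\big)\cap\mathbf 1$ with $\mathbb 1_{\mathcal T}(s)_i=1$ iff $s\in T_i$. Bellman operator: $\mathfrak B(f)(s)=\bigcap_af(s,a)$ for $s\in S_\circ$, $\mathrm{conv}(\bigcup_af(s,a))$ for $s\in S_\Box$. ECs/MECs as usual ($\mathsf{Exits}(T)$ = pairs $(s,a)$, $s\in T$, with a successor outside $T$). Best exit $\mathsf{exit}[f](T)=\big(\mathit{dwc}(\{\sum_{s\in T}\mathbb 1_{\mathcal T}(s)\})+\mathrm{conv}(\bigcup_{(s,a)\in\mathsf{Exits}(T),s\in S_\Box}f(s,a))\big)\cap\mathbf 1$, $\bigcup_\emptyset=\{\vec0\}$. $\mathsf{DEFLATE\_SECs}(G,L,U)$: states in no MEC keep $U(s)$; for each MEC $T$, compute a partition of $\mathsf D$ by common refinement over $s\in T\cap S_\circ$ of the nonempty sets $\{\mathbf d\mid B=\arg\min_{a}L(s,a)[\mathbf d]\}$, $B\subseteq\mathrm{Av}(s)$; for each region $R$ pick $\mathbf d\in R$, restrict Minimizer states in $T$ to actions minimizing $L(s,a)[\mathbf d]$, compute the MECs $\mathcal S$ of $T$ under the restriction; for $s\in T$, the new bound is the union over regions $R$ of $U(s)\cap\mathsf{exit}[U](C)\cap R$ if $s\in C\in\mathcal S$, else $U(s)\cap R$, together with $\vec0$. Multi-Objective Bounded Value Iteration: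 $L_0(s)=\{\vec0\}$, $U_0(s)=\mathit{dwc}(\{\vec1\})$; $\overline{\mathfrak B}(L,U)=(\mathfrak B(L),\mathsf{DEFLATE\_SECs}(G,\mathfrak B(L),\mathfrak B(U)))$. *)

theory Defs
  imports "HOL-Analysis.Analysis" "HOL-Probability.Probability"
begin

text \<open>
Stochastic games with finite state type 's, finite action type 'a and
objective dimension n = CARD('n) (vectors are real^'n).
A game is given by: the set Smax of Maximizer states (Minimizer states are
the complement), available actions Av, and transition distributions delta.
Histories are the lists of past (state, action) pairs; a strategy maps a
history and the current state to a distribution over actions.
\<close>

type_synonym ('s, 'a) strat = "('s \<times> 'a) list \<Rightarrow> 's \<Rightarrow> 'a pmf"

definition is_strategy :: "('s \<Rightarrow> 'a set) \<Rightarrow> 's set \<Rightarrow> ('s, 'a) strat \<Rightarrow> bool" where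
  "is_strategy Av P \<sigma> \<longleftrightarrow> (\<forall>h s. s \<in> P \<longrightarrow> set_pmf (\<sigma> h s) \<subseteq> Av s)"

text \<open>Probability of the finite prefix xs of a play (a stream of (state, action)
pairs), given past history h and current state s.\<close>
fun prefix_prob :: "'s set \<Rightarrow> ('s \<Rightarrow> 'a \<Rightarrow> 's pmf) \<Rightarrow> ('s, 'a) strat \<Rightarrow> ('s, 'a) strat
    \<Rightarrow> ('s \<times> 'a) list \<Rightarrow> 's \<Rightarrow> ('s \<times> 'a) list \<Rightarrow> real" where
  "prefix_prob Smax \<delta> \<sigma> \<tau> h s [] = 1"
| "prefix_prob Smax \<delta> \<sigma> \<tau> h s [(t, a)] =
     (if t = s then pmf (if s \<in> Smax then \<sigma> h s else \<tau> h s) a else 0)"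
| "prefix_prob Smax \<delta> \<sigma> \<tau> h s ((t, a) # (t', a') # xs) =
     (if t = s then pmf (if s \<in> Smax then \<sigma> h s else \<tau> h s) a * pmf (\<delta> s a) t'
        * prefix_prob Smax \<delta> \<sigma> \<tau> (h @ [(s, a)]) t' ((t', a') # xs) else 0)"

definition path_measure :: "'s set \<Rightarrow> ('s \<Rightarrow> 'a \<Rightarrow> 's pmf) \<Rightarrow> ('s, 'a) strat \<Rightarrow> ('s, 'a) strat
    \<Rightarrow> 's \<Rightarrow> ('s \<times> 'a) stream measure" where
  "path_measure Smax \<delta> \<sigma> \<tau> s = (THE M. prob_space M
      \<and> sets M = sets (stream_space (count_space UNIV))
      \<and> (\<forall>xs. emeasure M (sstart UNIV xs) = ennreal (prefix_prob Smax \<delta> \<sigma> \<tau> [] s xs)))"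

definition reach_prob :: "'s set \<Rightarrow> ('s \<Rightarrow> 'a \<Rightarrow> 's pmf) \<Rightarrow> ('s, 'a) strat \<Rightarrow> ('s, 'a) strat
    \<Rightarrow> 's \<Rightarrow> 's set \<Rightarrow> real" where
  "reach_prob Smax \<delta> \<sigma> \<tau> s Tgt =
     measure (path_measure Smax \<delta> \<sigma> \<tau> s) {\<omega>. \<exists>k. fst (\<omega> !! k) \<in> Tgt}"

definition achievable :: "'s set \<Rightarrow> ('s \<Rightarrow> 'a set) \<Rightarrow> ('s \<Rightarrow> 'a \<Rightarrow> 's pmf)
    \<Rightarrow> ('n::finite \<Rightarrow> 's set) \<Rightarrow> 's \<Rightarrow> (real^'n) set" where
  "achievable Smax Av \<delta> T s = {v. (\<forall>i. 0 \<le> v $ i) \<and>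
     (\<exists>\<sigma>. is_strategy Av Smax \<sigma> \<and>
        (\<forall>\<tau>. is_strategy Av (- Smax) \<tau> \<longrightarrow>
           (\<forall>i. reach_prob Smax \<delta> \<sigma> \<tau> s (T i) \<ge> v $ i)))}"

definition dwc :: "(real^'n::finite) set \<Rightarrow> (real^'n) set" where
  "dwc X = {y. (\<forall>i. 0 \<le> y $ i) \<and> (\<exists>x\<in>X. \<forall>i. y $ i \<le> x $ i)}"

definition unit_box :: "(real^'n::finite) set" where
  "unit_box = dwc {\<chi> i. 1}"

definition direction :: "real^'n::finite \<Rightarrow> (real^'n) set" where
  "direction v = {c *\<^sub>R v | c. c > 0}"

definition Dirs :: "(real^'n::finite) set set" where
  "Dirs = {direction v | v. (\<forall>i. 0 \<le> v $ i \<and> v $ i \<le> 1) \<and> v \<noteq> 0}"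

text \<open>\<open>X[d]\<close>, with sup of the empty set being 0.\<close>
definition along :: "(real^'n::finite) set \<Rightarrow> (real^'n) set \<Rightarrow> real" where
  "along X d = (let N = {norm x | x. x \<in> X \<and> direction x = d} in
                if N = {} then 0 else Sup N)"

definition indic_T :: "('n::finite \<Rightarrow> 's set) \<Rightarrow> 's \<Rightarrow> real^'n" where
  "indic_T T s = (\<chi> i. if s \<in> T i then 1 else 0)"

text \<open>\<open>f(s,a)\<close>; the Minkowski sum of the scaled sets \<open>\<delta>(s,a)(s')\<cdot>f(s')\<close>
over all (finitely many) states s' is written out elementwise.\<close>
definition f_act :: "('s::finite \<Rightarrow> 'a \<Rightarrow> 's pmf) \<Rightarrow> ('n::finite \<Rightarrow> 's set)
    \<Rightarrow> ('s \<Rightarrow> (real^'n) set) \<Rightarrow> 's \<Rightarrow> 'a \<Rightarrow> (real^'n) set" where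
  "f_act \<delta> T f s a =
     {x + y | x y. x \<in> dwc {indic_T T s} \<and>
        y \<in> {\<Sum>s'\<in>UNIV. pmf (\<delta> s a) s' *\<^sub>R g s' | g. \<forall>s'. g s' \<in> f s'}}
     \<inter> unit_box"

definition bellman :: "'s set \<Rightarrow> ('s \<Rightarrow> 'a set) \<Rightarrow> ('s::finite \<Rightarrow> 'a \<Rightarrow> 's pmf)
    \<Rightarrow> ('n::finite \<Rightarrow> 's set) \<Rightarrow> ('s \<Rightarrow> (real^'n) set) \<Rightarrow> 's \<Rightarrow> (real^'n) set" where
  "bellman Smax Av \<delta> T f s =
     (if s \<in> Smax then convex hull (\<Union>a\<in>Av s. f_act \<delta> T f s a)
      else (\<Inter>a\<in>Av s. f_act \<delta> T f s a))"

text \<open>Lower bounds of multi-objective BVI: the first component of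
\<open>\<overline>\<B>(L,U) = (\<B>(L), DEFLATE_SECs(\<dots>))\<close> is \<open>\<B>(L)\<close>, independent of U,
so \<open>L_i = \<B>^i(L_0)\<close> with \<open>L_0(s) = {0}\<close>.\<close>
definition bvi_L :: "'s set \<Rightarrow> ('s \<Rightarrow> 'a set) \<Rightarrow> ('s::finite \<Rightarrow> 'a \<Rightarrow> 's pmf)
    \<Rightarrow> ('n::finite \<Rightarrow> 's set) \<Rightarrow> nat \<Rightarrow> 's \<Rightarrow> (real^'n) set" where
  "bvi_L Smax Av \<delta> T i = (bellman Smax Av \<delta> T ^^ i) (\<lambda>s. {0})"

definition L_inf :: "'s set \<Rightarrow> ('s \<Rightarrow> 'a set) \<Rightarrow> ('s::finite \<Rightarrow> 'a \<Rightarrow> 's pmf)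
    \<Rightarrow> ('n::finite \<Rightarrow> 's set) \<Rightarrow> 's \<Rightarrow> (real^'n) set" where
  "L_inf Smax Av \<delta> T s = (\<Union>i. bvi_L Smax Av \<delta> T i s)"

end

theory Submission
  imports Defs
begin

definition Unif :: "real measure" where "Unif = uniform_measure lborel {0..<1}"

lemma prob_space_Unif: "prob_space Unif"
  unfolding Unif_def by (rule prob_space_uniform_measure) auto

lemma sets_Unif[simp, measurable_cong]: "sets Unif = sets borel"
  unfolding Unif_def by simp

lemma space_Unif[simp]: "space Unif = UNIV"
  unfolding Unif_def by simp

lemma emeasure_Unif_Ico:
  assumes "0 \<le> a" "a \<le> b" "b \<le> 1"
  shows "emeasure Unif {a..<b} = ennreal (b - a)"
proof -
  have "emeasure Unif {a..<b} = emeasure lborel ({0..<1} \<inter> {a..<b}) / emeasure lborel {0..<(1::real)}"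
    unfolding Unif_def by (rule emeasure_uniform_measure) auto
  also have "{0..<1} \<inter> {a..<b} = {a..<b}" using assms by auto
  finally show ?thesis using assms by (simp add: divide_ennreal_def)
qed

lemma sampler_exists:
  fixes p :: "'x::finite pmf"
  shows "\<exists>f. f \<in> Unif \<rightarrow>\<^sub>M count_space UNIV \<and> (\<forall>x. emeasure Unif (f -` {x} \<inter> space Unif) = pmf p x)"
proof -
  obtain es :: "'x list" where es: "set es = UNIV" "distinct es"
    using finite_distinct_list[of "UNIV::'x set"] by auto
  define n where "n = length es"
  have n0: "0 < n" using es unfolding n_def by (cases es) auto
  define c where "c j = (\<Sum>l<j. if l < n then pmf p (es ! l) else 0)" for j
  have c_Suc: "c (Suc j) = c j + (if j < n then pmf p (es ! j) else 0)" for j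
    unfolding c_def by simp
  have c_mono: "mono c"
    unfolding mono_iff_le_Suc by (simp add: c_Suc)
  have c0: "c 0 = 0" unfolding c_def by simp
  have c_nonneg: "0 \<le> c j" for j using c_mono c0 by (metis le0 monoD)
  have cn: "c n = 1"
  proof -
    have "c n = (\<Sum>l<n. pmf p (es ! l))" unfolding c_def by simp
    also have "\<dots> = (\<Sum>x\<in>set es. pmf p x)"
      using sum.reindex[OF inj_on_nth[OF es(2), of "{..<n}"], of "pmf p"] es
      unfolding n_def by (simp add: atLeast0LessThan[symmetric] atLeastLessThan_upt[symmetric])
        (metis atLeast_upt set_map nth_image lessThan_atLeast0 image_set map_nth)
    also have "\<dots> = 1" using es by (simp add: sum_pmf_eq_1)
    finally show ?thesis .
  qed
  have c_le1: "c j \<le> 1" for j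
  proof (cases "j \<le> n")
    case True then show ?thesis using c_mono cn by (metis monoD)
  next
    case False
    have "c j = c n + (\<Sum>l\<in>{n..<j}. if l < n then pmf p (es ! l) else 0)"
      unfolding c_def using False
      by (metis (no_types, lifting) le_add_diff_inverse nat_le_linear sum.atLeastLessThan_concat lessThan_atLeast0 zero_le)
    also have "\<dots> = c n" by simp
    finally show ?thesis using cn by simp
  qed
  define f where "f u = (if 0 \<le> u \<and> u < 1 then es ! (LEAST j. u < c (Suc j)) else es ! 0)" for u
  have Least_lt: "(LEAST j. u < c (Suc j)) < n" if "u < 1" for u
  proof -
    have "u < c (Suc (n - 1))" using n0 cn that by simp
    then have "(LEAST j. u < c (Suc j)) \<le> n - 1" by (rule Least_le)
    then show ?thesis using n0 by simp
  qed
  have Least_iff: "(LEAST j. u < c (Suc j)) = j \<longleftrightarrow> c j \<le> u \<and> u < c (Suc j)" if "u < 1" "0 \<le> u" for u j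
  proof
    assume L: "(LEAST j. u < c (Suc j)) = j"
    have ex: "\<exists>j. u < c (Suc j)" using n0 cn that by (intro exI[of _ "n - 1"]) simp
    have "u < c (Suc j)" using LeastI_ex[OF ex] L by simp
    moreover have "c j \<le> u"
    proof (cases j)
      case 0 then show ?thesis using c0 that by simp
    next
      case (Suc j')
      then have "\<not> u < c (Suc j')" using not_less_Least[of j' "\<lambda>j. u < c (Suc j)"] L by simp
      then show ?thesis using Suc by simp
    qed
    ultimately show "c j \<le> u \<and> u < c (Suc j)" by simp
  next
    assume H: "c j \<le> u \<and> u < c (Suc j)"
    show "(LEAST j. u < c (Suc j)) = j"
    proof (rule Least_equality)
      show "u < c (Suc j)" using H by simp
      fix l assume "u < c (Suc l)"
      show "j \<le> l"
      proof (rule ccontr)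
        assume "\<not> j \<le> l"
        then have "Suc l \<le> j" by simp
        then have "c (Suc l) \<le> c j" using c_mono by (metis monoD)
        then show False using H \<open>u < c (Suc l)\<close> by simp
      qed
    qed
  qed
  have pre: "f -` {es ! j} \<inter> {0..<1} = {c j..<c (Suc j)}" if "j < n" for j
  proof -
    { fix u :: real assume u: "0 \<le> u" "u < 1"
      have "f u = es ! j \<longleftrightarrow> (LEAST j. u < c (Suc j)) = j"
        using u Least_lt[of u] that es(2) unfolding f_def n_def by (simp add: nth_eq_iff_index_eq)
      also have "\<dots> \<longleftrightarrow> c j \<le> u \<and> u < c (Suc j)" using Least_iff u by simp
      finally have "f u = es ! j \<longleftrightarrow> c j \<le> u \<and> u < c (Suc j)" . }
    then show ?thesis using c_nonneg[of j] c_le1[of "Suc j"] by fastforce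
  qed
  have pre_sets: "f -` {x} \<in> sets borel" for x
  proof -
    obtain j where j: "j < n" "x = es ! j" using es unfolding n_def by (metis UNIV_I in_set_conv_nth)
    have "f -` {x} = (f -` {x} \<inter> {0..<1}) \<union> (f -` {x} \<inter> - {0..<1})" by auto
    also have "f -` {x} \<inter> - {0..<1} = (if x = es ! 0 then - {0..<1} else {})"
      unfolding f_def by auto
    finally have "f -` {x} = {c j..<c (Suc j)} \<union> (if x = es ! 0 then - {0..<1} else {})"
      using pre[OF j(1)] j(2) by simp
    then show ?thesis by simp
  qed
  have meas: "f \<in> Unif \<rightarrow>\<^sub>M count_space UNIV"
    unfolding measurable_count_space_eq2_countable using pre_sets by simp
  have "emeasure Unif (f -` {x} \<inter> space Unif) = pmf p x" for x
  proof -
    obtain j where j: "j < n" "x = es ! j" using es unfolding n_def by (metis UNIV_I in_set_conv_nth)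
    have "emeasure Unif (f -` {x}) = emeasure lborel ({0..<1} \<inter> f -` {x}) / emeasure lborel {0..<(1::real)}"
      unfolding Unif_def using pre_sets by (intro emeasure_uniform_measure) auto
    also have "{0..<1} \<inter> f -` {x} = {c j..<c (Suc j)}" using pre[OF j(1)] j(2) by auto
    also have "emeasure lborel {c j..<c (Suc j)} = ennreal (c (Suc j) - c j)"
      using c_mono by (simp add: monoD)
    also have "c (Suc j) - c j = pmf p x" using j by (simp add: c_Suc)
    finally show ?thesis by (simp add: divide_ennreal_def)
  qed
  with meas show ?thesis by blast
qed

definition samp :: "'x::finite pmf \<Rightarrow> real \<Rightarrow> 'x" where
  "samp p = (SOME f. f \<in> Unif \<rightarrow>\<^sub>M count_space UNIV \<and> (\<forall>x. emeasure Unif (f -` {x} \<inter> space Unif) = pmf p x))"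

lemma samp_meas[measurable]: "samp p \<in> Unif \<rightarrow>\<^sub>M count_space UNIV"
  and samp_emeasure: "emeasure Unif (samp p -` {x} \<inter> space Unif) = pmf p x"
  using someI_ex[OF sampler_exists[of p]] unfolding samp_def by auto

definition RM :: "(real \<times> real) measure" where "RM = Unif \<Otimes>\<^sub>M Unif"

lemma prob_space_RM: "prob_space RM"
proof -
  interpret U: prob_space Unif by (rule prob_space_Unif)
  interpret pair_prob_space Unif Unif ..
  show ?thesis unfolding RM_def by (rule prob_space_axioms)
qed

lemma sets_RM[measurable_cong]: "sets RM = sets (Unif \<Otimes>\<^sub>M Unif)" unfolding RM_def by simp

lemma fst_RM[measurable]: "fst \<in> RM \<rightarrow>\<^sub>M Unif" unfolding RM_def by simp
lemma snd_RM[measurable]: "snd \<in> RM \<rightarrow>\<^sub>M Unif" unfolding RM_def by simp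

primcorec gpath :: "(('s \<times> 'a) list \<Rightarrow> 's \<Rightarrow> 'a::finite pmf) \<Rightarrow> ('s \<Rightarrow> 'a \<Rightarrow> 's::finite pmf)
    \<Rightarrow> ('s \<times> 'a) list \<Rightarrow> 's \<Rightarrow> (real \<times> real) stream \<Rightarrow> ('s \<times> 'a) stream" where
  "gpath st d h s \<omega> = (s, samp (st h s) (fst (shd \<omega>))) ##
     gpath st d (h @ [(s, samp (st h s) (fst (shd \<omega>)))]) (samp (d s (samp (st h s) (fst (shd \<omega>)))) (snd (shd \<omega>))) (stl \<omega>)"

lemma gpath_Stream: "gpath st d h s (r ## x) = (s, samp (st h s) (fst r)) ##
     gpath st d (h @ [(s, samp (st h s) (fst r))]) (samp (d s (samp (st h s) (fst r))) (snd r)) x"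
  by (subst gpath.code) simp

lemma meas_count_pair:
  fixes F :: "'x \<Rightarrow> 'b::countable" and G :: "'x \<Rightarrow> 'c::countable"
  assumes "F \<in> N \<rightarrow>\<^sub>M count_space UNIV" "G \<in> N \<rightarrow>\<^sub>M count_space UNIV"
  shows "(\<lambda>x. (F x, G x)) \<in> N \<rightarrow>\<^sub>M count_space UNIV"
proof -
  have "(\<lambda>x. (F x, G x)) -` {(a, b)} \<inter> space N = (F -` {a} \<inter> space N) \<inter> (G -` {b} \<inter> space N)" for a b
    by auto
  moreover have "F -` {a} \<inter> space N \<in> sets N" "G -` {b} \<inter> space N \<in> sets N" for a b
    using assms by (auto simp: measurable_count_space_eq2_countable)
  ultimately show ?thesis unfolding measurable_count_space_eq2_countable by auto
qed

lemma meas_count_comp: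
  fixes F :: "'x \<Rightarrow> 'b::countable"
  assumes "F \<in> N \<rightarrow>\<^sub>M count_space UNIV"
  shows "(\<lambda>x. g (F x)) \<in> N \<rightarrow>\<^sub>M count_space UNIV"
  by (rule measurable_compose[OF assms]) simp

lemma gpath_meas:
  fixes H :: "'x \<Rightarrow> ('s::finite \<times> 'a::finite) list"
  assumes "H \<in> N \<rightarrow>\<^sub>M count_space UNIV" "S \<in> N \<rightarrow>\<^sub>M count_space UNIV" "R \<in> N \<rightarrow>\<^sub>M stream_space RM"
  shows "(\<lambda>x. gpath st d (H x) (S x) (R x)) \<in> N \<rightarrow>\<^sub>M stream_space (count_space UNIV)"
proof -
  define F where "F f \<longleftrightarrow> (\<exists>H S R. H \<in> N \<rightarrow>\<^sub>M count_space UNIV \<and> S \<in> N \<rightarrow>\<^sub>M count_space UNIV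
     \<and> R \<in> N \<rightarrow>\<^sub>M stream_space RM \<and> f = (\<lambda>x. gpath st d (H x) (S x) (R x)))"
    for f :: "'x \<Rightarrow> ('s \<times> 'a) stream"
  have A: "(\<lambda>x. samp (st (H x) (S x)) (fst (shd (R x)))) \<in> N \<rightarrow>\<^sub>M count_space UNIV"
    if "H \<in> N \<rightarrow>\<^sub>M count_space UNIV" "S \<in> N \<rightarrow>\<^sub>M count_space UNIV" "R \<in> N \<rightarrow>\<^sub>M stream_space RM"
    for H :: "'x \<Rightarrow> ('s \<times> 'a) list" and S R
  proof -
    have HS: "(\<lambda>x. (H x, S x)) \<in> N \<rightarrow>\<^sub>M count_space UNIV" using that by (intro meas_count_pair)
    have "(\<lambda>x. samp (st (fst i) (snd i)) (fst (shd (R x)))) \<in> N \<rightarrow>\<^sub>M count_space UNIV" for i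
      using that(3) by measurable
    from measurable_compose_countable[where f="\<lambda>i x. samp (st (fst i) (snd i)) (fst (shd (R x)))", OF this HS]
    show ?thesis by simp
  qed
  have "F (\<lambda>x. gpath st d (H x) (S x) (R x))" unfolding F_def using assms by blast
  then show ?thesis
  proof (rule measurable_stream_coinduct[where F=F])
    fix f assume "F f"
    then obtain H S R where HSR: "H \<in> N \<rightarrow>\<^sub>M count_space UNIV" "S \<in> N \<rightarrow>\<^sub>M count_space UNIV"
      "R \<in> N \<rightarrow>\<^sub>M stream_space RM" and f: "f = (\<lambda>x. gpath st d (H x) (S x) (R x))"
      unfolding F_def by blast
    show "(\<lambda>x. shd (f x)) \<in> N \<rightarrow>\<^sub>M count_space UNIV" unfolding f using meas_count_pair[OF HSR(2) A[OF HSR]] by simp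
  next
    fix f assume "F f"
    then obtain H S R where HSR: "H \<in> N \<rightarrow>\<^sub>M count_space UNIV" "S \<in> N \<rightarrow>\<^sub>M count_space UNIV"
      "R \<in> N \<rightarrow>\<^sub>M stream_space RM" and f: "f = (\<lambda>x. gpath st d (H x) (S x) (R x))"
      unfolding F_def by blast
    define Ax where "Ax x = samp (st (H x) (S x)) (fst (shd (R x)))" for x
    have Ax: "Ax \<in> N \<rightarrow>\<^sub>M count_space UNIV" unfolding Ax_def by (rule A[OF HSR])
    have H': "(\<lambda>x. H x @ [(S x, Ax x)]) \<in> N \<rightarrow>\<^sub>M count_space UNIV"
      using meas_count_comp[OF meas_count_pair[OF HSR(1) meas_count_pair[OF HSR(2) Ax]], of "\<lambda>(h, s, a). h @ [(s, a)]"]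
      by simp
    have SA: "(\<lambda>x. (S x, Ax x)) \<in> N \<rightarrow>\<^sub>M count_space UNIV" using HSR Ax by (intro meas_count_pair)
    have "(\<lambda>x. samp (d (fst i) (snd i)) (snd (shd (R x)))) \<in> N \<rightarrow>\<^sub>M count_space UNIV" for i
      using HSR(3) by measurable
    from measurable_compose_countable[where f="\<lambda>i x. samp (d (fst i) (snd i)) (snd (shd (R x)))", OF this SA]
    have S': "(\<lambda>x. samp (d (S x) (Ax x)) (snd (shd (R x)))) \<in> N \<rightarrow>\<^sub>M count_space UNIV" by simp
    have R': "(\<lambda>x. stl (R x)) \<in> N \<rightarrow>\<^sub>M stream_space RM" using HSR(3) by measurable
    show "F (\<lambda>x. stl (f x))" unfolding F_def f
      by (intro exI[of _ "\<lambda>x. H x @ [(S x, Ax x)]"] exI[of _ "\<lambda>x. samp (d (S x) (Ax x)) (snd (shd (R x)))"]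
          exI[of _ "\<lambda>x. stl (R x)"]) (use H' S' R' in \<open>simp add: Ax_def\<close>)
  qed
qed

lemma gpath_meas'[measurable]: "gpath st d h s \<in> stream_space RM \<rightarrow>\<^sub>M stream_space (count_space UNIV)"
  using gpath_meas[of "\<lambda>_. h" "stream_space RM" "\<lambda>_. s" "\<lambda>x. x" st d] by simp

lemma space_RM[simp]: "space RM = UNIV" unfolding RM_def by (simp add: space_pair_measure)

lemma prefix_prob_nonneg: "0 \<le> prefix_prob Smax \<delta> \<sigma> \<tau> h s xs"
  by (induction Smax \<delta> \<sigma> \<tau> h s xs rule: prefix_prob.induct) auto

lemma prefix_prob_Cons_state:
  "prefix_prob Smax \<delta> \<sigma> \<tau> h s ((t, a) # zs) = (if t = s then prefix_prob Smax \<delta> \<sigma> \<tau> h t ((t, a) # zs) else 0)"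
proof (cases zs)
  case (Cons p zs')
  then show ?thesis by (cases p) auto
qed auto

definition stc :: "'s set \<Rightarrow> ('s, 'a) strat \<Rightarrow> ('s, 'a) strat \<Rightarrow> ('s, 'a) strat" where
  "stc Smax \<sigma> \<tau> h s = (if s \<in> Smax then \<sigma> h s else \<tau> h s)"

lemma prob_space_P: "prob_space (stream_space RM)"
  using prob_space.prob_space_stream_space[OF prob_space_RM] .

lemma emeasure_RM_Times: "emeasure RM (A \<times> B) = emeasure Unif A * emeasure Unif B"
  if "A \<in> sets borel" "B \<in> sets borel"
proof -
  interpret prob_space Unif by (rule prob_space_Unif)
  show ?thesis unfolding RM_def using that by (intro emeasure_pair_measure_Times) auto
qed

lemma gpath_sstart:
  fixes \<delta> :: "'s::finite \<Rightarrow> 'a::finite \<Rightarrow> 's pmf"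
  shows "emeasure (stream_space RM) {\<omega> \<in> space (stream_space RM). gpath (stc Smax \<sigma> \<tau>) \<delta> h s \<omega> \<in> sstart UNIV xs}
    = ennreal (prefix_prob Smax \<delta> \<sigma> \<tau> h s xs)"
proof (induction xs arbitrary: h s)
  case Nil
  interpret P: prob_space "stream_space RM" by (rule prob_space_P)
  show ?case using P.emeasure_space_1 by simp
next
  case (Cons p ys)
  obtain t0 a0 where p: "p = (t0, a0)" by (cases p)
  interpret R: prob_space RM by (rule prob_space_RM)
  interpret U: prob_space Unif by (rule prob_space_Unif)
  let ?st = "stc Smax \<sigma> \<tau>"
  let ?P = "stream_space RM"
  let ?X = "{\<omega> \<in> space ?P. gpath ?st \<delta> h s \<omega> \<in> sstart UNIV (p # ys)}"
  define A where "A r = samp (?st h s) (fst r)" for r :: "real \<times> real"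
  define S where "S r = samp (\<delta> s a0) (snd r)" for r :: "real \<times> real"
  let ?h' = "h @ [(s, a0)]"
  have X: "?X \<in> sets ?P" by measurable
  have "emeasure ?P ?X = (\<integral>\<^sup>+r. emeasure ?P {x\<in>space ?P. r ## x \<in> ?X} \<partial>RM)"
    by (rule R.emeasure_stream_space[OF X])
  also have "\<dots> = (\<integral>\<^sup>+r. (if s = t0 \<and> A r = a0 then ennreal (prefix_prob Smax \<delta> \<sigma> \<tau> ?h' (S r) ys) else 0) \<partial>RM)"
  proof (rule nn_integral_cong)
    fix r :: "real \<times> real"
    have "{x\<in>space ?P. r ## x \<in> ?X} = (if s = t0 \<and> A r = a0 then {x\<in>space ?P. gpath ?st \<delta> ?h' (S r) x \<in> sstart UNIV ys} else {})"
      by (auto simp: p gpath_Stream A_def S_def space_stream_space)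
    then show "emeasure ?P {x\<in>space ?P. r ## x \<in> ?X} = (if s = t0 \<and> A r = a0 then ennreal (prefix_prob Smax \<delta> \<sigma> \<tau> ?h' (S r) ys) else 0)"
      using Cons.IH by simp
  qed
  also have "\<dots> = ennreal (prefix_prob Smax \<delta> \<sigma> \<tau> h s (p # ys))"
  proof (cases "s = t0")
    case False
    then show ?thesis unfolding p by (subst prefix_prob_Cons_state) simp
  next
    case True
    have B: "samp (?st h s) -` {a0} \<in> sets borel"
      using measurable_sets[OF samp_meas[of "?st h s"], of "{a0}"] by simp
    show ?thesis
    proof (cases ys)
      case Nil
      have "(\<integral>\<^sup>+r. (if s = t0 \<and> A r = a0 then ennreal (prefix_prob Smax \<delta> \<sigma> \<tau> ?h' (S r) ys) else 0) \<partial>RM)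
          = (\<integral>\<^sup>+r. indicator (samp (?st h s) -` {a0} \<times> UNIV) r \<partial>RM)"
        using True Nil by (intro nn_integral_cong) (auto simp: A_def split: split_indicator)
      also have "\<dots> = emeasure RM (samp (?st h s) -` {a0} \<times> UNIV)"
        using B by (intro nn_integral_indicator) (simp add: RM_def)
      also have "\<dots> = emeasure Unif (samp (?st h s) -` {a0}) * emeasure Unif UNIV"
        using B by (intro emeasure_RM_Times) auto
      also have "\<dots> = ennreal (pmf (?st h s) a0)"
        using samp_emeasure[of "?st h s" a0] U.emeasure_space_1 by simp
      finally show ?thesis using True Nil by (simp add: p stc_def)
    next
      case (Cons q zs)
      obtain t1 a1 where q: "q = (t1, a1)" by (cases q)
      have C: "samp (\<delta> s a0) -` {t1} \<in> sets borel"
        using measurable_sets[OF samp_meas[of "\<delta> s a0"], of "{t1}"] by simp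
      let ?c = "prefix_prob Smax \<delta> \<sigma> \<tau> ?h' t1 ys"
      have "(\<integral>\<^sup>+r. (if s = t0 \<and> A r = a0 then ennreal (prefix_prob Smax \<delta> \<sigma> \<tau> ?h' (S r) ys) else 0) \<partial>RM)
          = (\<integral>\<^sup>+r. ennreal ?c * indicator (samp (?st h s) -` {a0} \<times> samp (\<delta> s a0) -` {t1}) r \<partial>RM)"
      proof (intro nn_integral_cong)
        fix r :: "real \<times> real"
        have e: "prefix_prob Smax \<delta> \<sigma> \<tau> ?h' (S r) ys = (if t1 = S r then ?c else 0)"
          using prefix_prob_Cons_state[of Smax \<delta> \<sigma> \<tau> ?h' "S r" t1 a1 zs] Cons q by simp
        show "(if s = t0 \<and> A r = a0 then ennreal (prefix_prob Smax \<delta> \<sigma> \<tau> ?h' (S r) ys) else 0) =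
          ennreal ?c * indicator (samp (?st h s) -` {a0} \<times> samp (\<delta> s a0) -` {t1}) r"
          unfolding e using True by (cases r) (auto simp: A_def S_def split: split_indicator)
      qed
      also have "\<dots> = ennreal ?c * emeasure RM (samp (?st h s) -` {a0} \<times> samp (\<delta> s a0) -` {t1})"
        using B C by (intro nn_integral_cmult_indicator) (simp add: RM_def)
      also have "\<dots> = ennreal ?c * (emeasure Unif (samp (?st h s) -` {a0}) * emeasure Unif (samp (\<delta> s a0) -` {t1}))"
        using B C by (simp add: emeasure_RM_Times)
      also have "\<dots> = ennreal ?c * (ennreal (pmf (?st h s) a0) * ennreal (pmf (\<delta> s a0) t1))"
        using samp_emeasure[of "?st h s" a0] samp_emeasure[of "\<delta> s a0" t1] by simp
      also have "\<dots> = ennreal (pmf (?st h s) a0 * pmf (\<delta> s a0) t1 * ?c)"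
        by (simp add: ennreal_mult prefix_prob_nonneg mult_ac)
      finally show ?thesis using True Cons q by (simp add: p stc_def)
    qed
  qed
  finally show ?case .
qed

lemma path_measure_props:
  fixes \<delta> :: "'s::finite \<Rightarrow> 'a::finite \<Rightarrow> 's pmf"
  shows "prob_space (path_measure Smax \<delta> \<sigma> \<tau> s) \<and>
    sets (path_measure Smax \<delta> \<sigma> \<tau> s) = sets (stream_space (count_space UNIV)) \<and>
    (\<forall>xs. emeasure (path_measure Smax \<delta> \<sigma> \<tau> s) (sstart UNIV xs) = ennreal (prefix_prob Smax \<delta> \<sigma> \<tau> [] s xs))"
proof -
  let ?Q = "\<lambda>M. prob_space M \<and> sets M = sets (stream_space (count_space UNIV)) \<and>
    (\<forall>xs. emeasure M (sstart UNIV xs) = ennreal (prefix_prob Smax \<delta> \<sigma> \<tau> [] s xs))"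
  define M0 where "M0 = distr (stream_space RM) (stream_space (count_space UNIV)) (gpath (stc Smax \<sigma> \<tau>) \<delta> [] s)"
  have Q0: "?Q M0"
  proof (intro conjI allI)
    show "prob_space M0" unfolding M0_def
      by (rule prob_space.prob_space_distr[OF prob_space_P gpath_meas'])
    show "sets M0 = sets (stream_space (count_space UNIV))" unfolding M0_def by simp
    fix xs :: "('s \<times> 'a) list"
    have "emeasure M0 (sstart UNIV xs) = emeasure (stream_space RM) (gpath (stc Smax \<sigma> \<tau>) \<delta> [] s -` sstart UNIV xs \<inter> space (stream_space RM))"
      unfolding M0_def by (rule emeasure_distr[OF gpath_meas' sets_sstart])
    also have "gpath (stc Smax \<sigma> \<tau>) \<delta> [] s -` sstart UNIV xs \<inter> space (stream_space RM) =
      {\<omega> \<in> space (stream_space RM). gpath (stc Smax \<sigma> \<tau>) \<delta> [] s \<omega> \<in> sstart UNIV xs}" by auto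
    finally show "emeasure M0 (sstart UNIV xs) = ennreal (prefix_prob Smax \<delta> \<sigma> \<tau> [] s xs)"
      using gpath_sstart by simp
  qed
  have uniq: "M = N" if "?Q M" "?Q N" for M N
    using that by (intro stream_space_eq_sstart[of UNIV]) auto
  have "?Q (THE M. ?Q M)" by (rule theI[of ?Q M0, OF Q0]) (use uniq Q0 in blast)
  then show ?thesis unfolding path_measure_def .
qed

fun Rf :: "'s set \<Rightarrow> ('s \<Rightarrow> 'a \<Rightarrow> 's pmf) \<Rightarrow> ('s, 'a) strat \<Rightarrow> ('s, 'a) strat
    \<Rightarrow> ('s \<times> 'a) list \<Rightarrow> 's \<Rightarrow> nat \<Rightarrow> 's set \<Rightarrow> real" where
  "Rf Smax \<delta> \<sigma> \<tau> h s 0 Tg = (if s \<in> Tg then 1 else 0)"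
| "Rf Smax \<delta> \<sigma> \<tau> h s (Suc k) Tg = (if s \<in> Tg then 1 else
     (\<Sum>a\<in>UNIV. pmf (stc Smax \<sigma> \<tau> h s) a * (\<Sum>s'\<in>UNIV. pmf (\<delta> s a) s' * Rf Smax \<delta> \<sigma> \<tau> (h @ [(s, a)]) s' k Tg)))"

definition Lk :: "nat \<Rightarrow> ('s \<times> 'a) list set" where "Lk n = {xs. length xs = n}"

lemma finite_Lk[simp]: "finite (Lk n :: ('s::finite \<times> 'a::finite) list set)"
  using finite_lists_length_eq[of "UNIV :: ('s \<times> 'a) set" n] unfolding Lk_def by simp

lemma sum_Lk_Suc:
  fixes f :: "('s::finite \<times> 'a::finite) list \<Rightarrow> real"
  shows "(\<Sum>xs\<in>Lk (Suc n). f xs) = (\<Sum>t\<in>UNIV. \<Sum>a\<in>UNIV. \<Sum>ys\<in>Lk n. f ((t, a) # ys))"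
proof -
  have eq: "Lk (Suc n) = (\<lambda>(p, ys). p # ys) ` (UNIV \<times> Lk n)"
    unfolding Lk_def by (auto simp: length_Suc_conv image_iff)
  have inj: "inj_on (\<lambda>(p, ys). p # ys) (UNIV \<times> (Lk n :: ('s \<times> 'a) list set))"
    by (auto simp: inj_on_def)
  have "(\<Sum>xs\<in>Lk (Suc n). f xs) = (\<Sum>(p, ys)\<in>UNIV \<times> Lk n. f (p # ys))"
    by (simp only: eq sum.reindex[OF inj] o_def) (simp add: split_def)
  also have "\<dots> = (\<Sum>p\<in>UNIV. \<Sum>ys\<in>Lk n. f (p # ys))"
    by (rule sum.cartesian_product[symmetric])
  also have "\<dots> = (\<Sum>(t, a)\<in>UNIV \<times> UNIV. \<Sum>ys\<in>Lk n. f ((t, a) # ys))"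
    by (simp add: UNIV_Times_UNIV case_prod_beta)
  also have "\<dots> = (\<Sum>t\<in>UNIV. \<Sum>a\<in>UNIV. \<Sum>ys\<in>Lk n. f ((t, a) # ys))"
    by (rule sum.cartesian_product[symmetric])
  finally show ?thesis .
qed

lemma sum_pmf_UNIV: "(\<Sum>x\<in>UNIV. pmf p (x::'x::finite)) = 1"
  by (rule sum_pmf_eq_1) auto

lemma sum_if_eq: "(\<Sum>t\<in>UNIV. \<Sum>a\<in>UNIV. if t = (s::'s::finite) then g (a::'a::finite) else (0::real)) = (\<Sum>a\<in>UNIV. g a)"
  by (subst sum.swap) simp

lemma sum_if_eq3: "(\<Sum>t\<in>UNIV. \<Sum>a\<in>UNIV. \<Sum>y\<in>Y. if t = (s::'s::finite) then F (a::'a::finite) y else (0::real))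
   = (\<Sum>a\<in>UNIV. \<Sum>y\<in>Y. F a y)"
proof -
  have "(\<Sum>a\<in>UNIV. \<Sum>y\<in>Y. if t = s then F a y else (0::real)) = (if t = s then \<Sum>a\<in>UNIV. \<Sum>y\<in>Y. F a y else 0)" for t
    by auto
  then show ?thesis by simp
qed

lemma prefix_prob_Cons_Cons:
  fixes \<delta> :: "'s::finite \<Rightarrow> 'a \<Rightarrow> 's pmf"
  assumes "ys \<noteq> []"
  shows "prefix_prob Smax \<delta> \<sigma> \<tau> h s ((t, a) # ys) = (if t = s then pmf (stc Smax \<sigma> \<tau> h s) a *
    (\<Sum>s'\<in>UNIV. pmf (\<delta> s a) s' * prefix_prob Smax \<delta> \<sigma> \<tau> (h @ [(s, a)]) s' ys) else 0)"
proof -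
  obtain t' a' ys' where ys: "ys = (t', a') # ys'" using assms by (cases ys) auto
  have "(\<Sum>s'\<in>UNIV. pmf (\<delta> s a) s' * prefix_prob Smax \<delta> \<sigma> \<tau> (h @ [(s, a)]) s' ys)
      = (\<Sum>s'\<in>UNIV. if t' = s' then pmf (\<delta> s a) t' * prefix_prob Smax \<delta> \<sigma> \<tau> (h @ [(s, a)]) t' ys else 0)"
  proof (intro sum.cong refl)
    fix x
    have "prefix_prob Smax \<delta> \<sigma> \<tau> (h @ [(s, a)]) x ys = (if t' = x then prefix_prob Smax \<delta> \<sigma> \<tau> (h @ [(s, a)]) t' ys else 0)"
      unfolding ys by (rule prefix_prob_Cons_state)
    then show "pmf (\<delta> s a) x * prefix_prob Smax \<delta> \<sigma> \<tau> (h @ [(s, a)]) x ys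
       = (if t' = x then pmf (\<delta> s a) t' * prefix_prob Smax \<delta> \<sigma> \<tau> (h @ [(s, a)]) t' ys else 0)"
      by (cases "t' = x") simp_all
  qed
  also have "\<dots> = pmf (\<delta> s a) t' * prefix_prob Smax \<delta> \<sigma> \<tau> (h @ [(s, a)]) t' ys"
    by simp
  finally show ?thesis by (simp add: ys stc_def)
qed

lemma Lk_0[simp]: "Lk 0 = {[]}" unfolding Lk_def by auto

lemma prefix_prob_single: "prefix_prob Smax \<delta> \<sigma> \<tau> h s [(t, a)] = (if t = s then pmf (stc Smax \<sigma> \<tau> h s) a else 0)"
  by (simp add: stc_def)

lemma prefix_prob_nz_hd:
  "prefix_prob Smax \<delta> \<sigma> \<tau> h s ((t, a) # ys) \<noteq> 0 \<Longrightarrow> t = s"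
  by (subst (asm) prefix_prob_Cons_state) (auto split: if_splits)

lemma total_prefix:
  fixes \<delta> :: "'s::finite \<Rightarrow> 'a::finite \<Rightarrow> 's pmf"
  shows "(\<Sum>xs\<in>Lk (Suc k). prefix_prob Smax \<delta> \<sigma> \<tau> h s xs) = 1"
proof (induction k arbitrary: h s)
  case 0
  have "(\<Sum>xs\<in>Lk (Suc 0). prefix_prob Smax \<delta> \<sigma> \<tau> h s xs) =
     (\<Sum>t\<in>UNIV. \<Sum>a\<in>UNIV. (if t = s then pmf (stc Smax \<sigma> \<tau> h s) a else 0))"
    by (subst sum_Lk_Suc) (simp add: prefix_prob_single del: prefix_prob.simps(2))
  also have "\<dots> = 1" by (simp only: sum_if_eq sum_pmf_UNIV)
  finally show ?case .
next
  case (Suc k)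
  have ne: "ys \<in> Lk (Suc k) \<Longrightarrow> ys \<noteq> []" for ys :: "('s \<times> 'a) list" by (auto simp: Lk_def)
  have "(\<Sum>xs\<in>Lk (Suc (Suc k)). prefix_prob Smax \<delta> \<sigma> \<tau> h s xs) =
     (\<Sum>t\<in>UNIV. \<Sum>a\<in>UNIV. \<Sum>ys\<in>Lk (Suc k). (if t = s then pmf (stc Smax \<sigma> \<tau> h s) a *
       (\<Sum>s'\<in>UNIV. pmf (\<delta> s a) s' * prefix_prob Smax \<delta> \<sigma> \<tau> (h @ [(s, a)]) s' ys) else 0))"
    by (subst sum_Lk_Suc) (intro sum.cong refl, simp add: prefix_prob_Cons_Cons ne)
  also have "\<dots> = (\<Sum>a\<in>UNIV. pmf (stc Smax \<sigma> \<tau> h s) a *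
       (\<Sum>s'\<in>UNIV. pmf (\<delta> s a) s' * (\<Sum>ys\<in>Lk (Suc k). prefix_prob Smax \<delta> \<sigma> \<tau> (h @ [(s, a)]) s' ys)))"
    by (simp add: sum_distrib_left sum.swap[of _ _ "Lk (Suc k)"] sum_if_eq3)
  also have "\<dots> = 1" by (simp add: Suc.IH sum_pmf_UNIV)
  finally show ?case .
qed

definition hits :: "'s set \<Rightarrow> ('s \<times> 'a) list \<Rightarrow> bool" where
  "hits Tg xs \<longleftrightarrow> (\<exists>p\<in>set xs. fst p \<in> Tg)"

lemma hit_prefix:
  fixes \<delta> :: "'s::finite \<Rightarrow> 'a::finite \<Rightarrow> 's pmf"
  shows "(\<Sum>xs\<in>Lk (Suc k). if hits Tg xs then prefix_prob Smax \<delta> \<sigma> \<tau> h s xs else 0) = Rf Smax \<delta> \<sigma> \<tau> h s k Tg"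
proof (cases "s \<in> Tg")
  case True
  have "(\<Sum>xs\<in>Lk (Suc k). if hits Tg xs then prefix_prob Smax \<delta> \<sigma> \<tau> h s xs else 0) =
     (\<Sum>xs\<in>Lk (Suc k). prefix_prob Smax \<delta> \<sigma> \<tau> h s xs)"
  proof (intro sum.cong refl)
    fix xs :: "('s \<times> 'a) list" assume "xs \<in> Lk (Suc k)"
    then obtain t a ys where xs: "xs = (t, a) # ys" by (auto simp: Lk_def length_Suc_conv)
    show "(if hits Tg xs then prefix_prob Smax \<delta> \<sigma> \<tau> h s xs else 0) = prefix_prob Smax \<delta> \<sigma> \<tau> h s xs"
      using prefix_prob_nz_hd[of Smax \<delta> \<sigma> \<tau> h s t a ys] True by (auto simp: xs hits_def)
  qed
  also have "\<dots> = 1" by (rule total_prefix)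
  finally show ?thesis using True by (cases k) auto
next
  case False
  then show ?thesis
  proof (induction k arbitrary: h s)
    case 0
    have "(\<Sum>xs\<in>Lk (Suc 0). if hits Tg xs then prefix_prob Smax \<delta> \<sigma> \<tau> h s xs else 0) = 0"
      using 0 by (intro sum.neutral) (auto simp: Lk_def length_Suc_conv hits_def dest: prefix_prob_nz_hd)
    then show ?case using 0 by simp
  next
    case (Suc k)
    have ne: "ys \<in> Lk (Suc k) \<Longrightarrow> ys \<noteq> []" for ys :: "('s \<times> 'a) list" by (auto simp: Lk_def)
    have "(\<Sum>xs\<in>Lk (Suc (Suc k)). if hits Tg xs then prefix_prob Smax \<delta> \<sigma> \<tau> h s xs else 0) =
       (\<Sum>t\<in>UNIV. \<Sum>a\<in>UNIV. \<Sum>ys\<in>Lk (Suc k). (if t = s then pmf (stc Smax \<sigma> \<tau> h s) a *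
         (\<Sum>s'\<in>UNIV. pmf (\<delta> s a) s' * (if hits Tg ys then prefix_prob Smax \<delta> \<sigma> \<tau> (h @ [(s, a)]) s' ys else 0)) else 0))"
      using Suc.prems
      by (subst sum_Lk_Suc) (intro sum.cong refl, auto simp: prefix_prob_Cons_Cons ne hits_def)
    also have "\<dots> = (\<Sum>a\<in>UNIV. pmf (stc Smax \<sigma> \<tau> h s) a *
       (\<Sum>s'\<in>UNIV. pmf (\<delta> s a) s' * (\<Sum>ys\<in>Lk (Suc k). if hits Tg ys then prefix_prob Smax \<delta> \<sigma> \<tau> (h @ [(s, a)]) s' ys else 0)))"
      by (simp add: sum_distrib_left sum.swap[of _ _ "Lk (Suc k)"] sum_if_eq3)
    also have "\<dots> = Rf Smax \<delta> \<sigma> \<tau> h s (Suc k) Tg"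
    proof -
      have "(\<Sum>ys\<in>Lk (Suc k). if hits Tg ys then prefix_prob Smax \<delta> \<sigma> \<tau> (h @ [(s, a)]) s' ys else 0)
         = Rf Smax \<delta> \<sigma> \<tau> (h @ [(s, a)]) s' k Tg" for a s'
      proof (cases "s' \<in> Tg")
        case True
        have "(\<Sum>xs\<in>Lk (Suc k). if hits Tg xs then prefix_prob Smax \<delta> \<sigma> \<tau> (h @ [(s, a)]) s' xs else 0) =
           (\<Sum>xs\<in>Lk (Suc k). prefix_prob Smax \<delta> \<sigma> \<tau> (h @ [(s, a)]) s' xs)"
        proof (intro sum.cong refl)
          fix xs :: "('s \<times> 'a) list" assume "xs \<in> Lk (Suc k)"
          then obtain t a' ys where xs: "xs = (t, a') # ys" by (auto simp: Lk_def length_Suc_conv)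
          show "(if hits Tg xs then prefix_prob Smax \<delta> \<sigma> \<tau> (h @ [(s, a)]) s' xs else 0) = prefix_prob Smax \<delta> \<sigma> \<tau> (h @ [(s, a)]) s' xs"
            using prefix_prob_nz_hd[of Smax \<delta> \<sigma> \<tau> "h @ [(s, a)]" s' t a' ys] True by (auto simp: xs hits_def)
        qed
        also have "\<dots> = 1" by (rule total_prefix)
        finally show ?thesis using True by (cases k) auto
      next
        case False
        then show ?thesis by (rule Suc.IH)
      qed
      then show ?thesis using Suc.prems by simp
    qed
    finally show ?case .
  qed
qed

lemma Rf_nonneg: "0 \<le> Rf Smax \<delta> \<sigma> \<tau> h s k Tg"
  by (induction k arbitrary: h s) (auto intro!: sum_nonneg mult_nonneg_nonneg)

definition Ev :: "nat \<Rightarrow> 's set \<Rightarrow> ('s \<times> 'a) stream set" where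
  "Ev k Tg = {\<omega>. \<exists>j\<le>k. fst (\<omega> !! j) \<in> Tg}"

lemma Ev_eq: fixes Tg :: "'s set"
  shows "(Ev k Tg :: ('s \<times> 'a) stream set) = (\<Union>xs\<in>{xs\<in>Lk (Suc k). hits Tg xs}. sstart UNIV xs)"
proof (intro equalityI subsetI)
  fix \<omega> :: "('s \<times> 'a) stream" assume "\<omega> \<in> Ev k Tg"
  then obtain j where j: "j \<le> k" "fst (\<omega> !! j) \<in> Tg" unfolding Ev_def by blast
  have "\<omega> !! j \<in> set (stake (Suc k) \<omega>)" using j
    by (metis stake_nth length_stake less_Suc_eq_le nth_mem)
  then have "stake (Suc k) \<omega> \<in> {xs\<in>Lk (Suc k). hits Tg xs}"
    unfolding Lk_def hits_def using j by auto
  moreover have "\<omega> \<in> sstart UNIV (stake (Suc k) \<omega>)" by (simp add: sstart_eq)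
  ultimately show "\<omega> \<in> (\<Union>xs\<in>{xs\<in>Lk (Suc k). hits Tg xs}. sstart UNIV xs)" by blast
next
  fix \<omega> :: "('s \<times> 'a) stream" assume "\<omega> \<in> (\<Union>xs\<in>{xs\<in>Lk (Suc k). hits Tg xs}. sstart UNIV xs)"
  then obtain xs where xs: "length xs = Suc k" "hits Tg xs" "\<omega> \<in> sstart UNIV xs" unfolding Lk_def by auto
  then obtain j where j: "j < Suc k" "fst (xs ! j) \<in> Tg" unfolding hits_def by (auto simp: in_set_conv_nth)
  have "\<omega> !! j = xs ! j" using xs(1,3) j(1) by (simp add: sstart_eq)
  then show "\<omega> \<in> Ev k Tg" unfolding Ev_def using j by (intro CollectI exI[of _ j]) auto
qed

context
  fixes Smax :: "'s::finite set" and \<delta> :: "'s \<Rightarrow> 'a::finite \<Rightarrow> 's pmf" and \<sigma> \<tau> :: "('s, 'a) strat" and s :: 's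
begin

abbreviation "PM \<equiv> path_measure Smax \<delta> \<sigma> \<tau> s"

lemma PM_prob: "prob_space PM"
  and PM_sets: "sets PM = sets (stream_space (count_space UNIV))"
  and PM_cyl: "emeasure PM (sstart UNIV xs) = ennreal (prefix_prob Smax \<delta> \<sigma> \<tau> [] s xs)"
  using path_measure_props[of Smax \<delta> \<sigma> \<tau> s] by auto

lemma Ev_sets: "Ev k Tg \<in> sets PM"
proof -
  have "finite {xs\<in>(Lk (Suc k) :: ('s \<times> 'a) list set). hits Tg xs}" by (rule finite_subset[of _ "Lk (Suc k) :: ('s \<times> 'a) list set"]) auto
  then show ?thesis unfolding Ev_eq PM_sets by (intro sets.finite_UN) auto
qed

lemma measure_Ev: "measure PM (Ev k Tg) = Rf Smax \<delta> \<sigma> \<tau> [] s k Tg"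
proof -
  let ?I = "{xs\<in>(Lk (Suc k) :: ('s \<times> 'a) list set). hits Tg xs}"
  have fin: "finite ?I" by (rule finite_subset[of _ "Lk (Suc k) :: ('s \<times> 'a) list set"]) auto
  have disj: "disjoint_family_on (sstart UNIV) ?I"
    unfolding disjoint_family_on_def
  proof (intro ballI impI)
    fix xs ys assume "xs \<in> ?I" "ys \<in> ?I" "xs \<noteq> ys"
    then have len: "length xs = length ys" by (auto simp: Lk_def)
    show "sstart UNIV xs \<inter> sstart UNIV ys = {}"
    proof (rule ccontr)
      assume "sstart UNIV xs \<inter> sstart UNIV ys \<noteq> {}"
      then obtain \<omega> where "\<omega> \<in> sstart UNIV xs" "\<omega> \<in> sstart UNIV ys" by blast
      then have "\<forall>i<length xs. xs ! i = ys ! i" using len by (simp add: sstart_eq)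
      then have "xs = ys" using len by (intro nth_equalityI) auto
      then show False using \<open>xs \<noteq> ys\<close> by simp
    qed
  qed
  have "emeasure PM (Ev k Tg) = (\<Sum>xs\<in>?I. emeasure PM (sstart UNIV xs))"
    unfolding Ev_eq using fin disj by (intro sum_emeasure[symmetric]) (auto simp: PM_sets)
  also have "\<dots> = (\<Sum>xs\<in>?I. ennreal (prefix_prob Smax \<delta> \<sigma> \<tau> [] s xs))" by (simp add: PM_cyl)
  also have "\<dots> = ennreal (\<Sum>xs\<in>?I. prefix_prob Smax \<delta> \<sigma> \<tau> [] s xs)"
    by (simp add: prefix_prob_nonneg)
  also have "(\<Sum>xs\<in>?I. prefix_prob Smax \<delta> \<sigma> \<tau> [] s xs) =
     (\<Sum>xs\<in>Lk (Suc k). if hits Tg xs then prefix_prob Smax \<delta> \<sigma> \<tau> [] s xs else 0)"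
    by (simp add: sum.inter_filter)
  also have "\<dots> = Rf Smax \<delta> \<sigma> \<tau> [] s k Tg" by (rule hit_prefix)
  finally show ?thesis by (simp add: measure_def Rf_nonneg)
qed

lemma reach_eq: "{\<omega>. \<exists>k. fst (\<omega> !! k) \<in> Tg} = (\<Union>k. Ev k Tg)"
  unfolding Ev_def by auto

lemma Rf_le_reach: "Rf Smax \<delta> \<sigma> \<tau> [] s k Tg \<le> reach_prob Smax \<delta> \<sigma> \<tau> s Tg"
proof -
  interpret prob_space PM by (rule PM_prob)
  have "measure PM (Ev k Tg) \<le> measure PM {\<omega>. \<exists>k. fst (\<omega> !! k) \<in> Tg}"
    unfolding reach_eq using Ev_sets by (intro finite_measure_mono) auto
  then show ?thesis unfolding reach_prob_def measure_Ev .
qed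

lemma reach_tendsto: "(\<lambda>k. Rf Smax \<delta> \<sigma> \<tau> [] s k Tg) \<longlonglongrightarrow> reach_prob Smax \<delta> \<sigma> \<tau> s Tg"
proof -
  interpret prob_space PM by (rule PM_prob)
  have "incseq (\<lambda>k. Ev k Tg)" unfolding incseq_def Ev_def by (auto intro: order_trans)
  then have "(\<lambda>k. measure PM (Ev k Tg)) \<longlonglongrightarrow> measure PM (\<Union>k. Ev k Tg)"
    using Ev_sets by (intro finite_Lim_measure_incseq) auto
  then show ?thesis unfolding reach_prob_def reach_eq measure_Ev .
qed

lemma reach_le1: "reach_prob Smax \<delta> \<sigma> \<tau> s Tg \<le> 1"
proof -
  interpret prob_space PM by (rule PM_prob)
  show ?thesis unfolding reach_prob_def by (rule prob_le_1)
qed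

end

definition Sg :: "('s \<Rightarrow> 'a \<Rightarrow> 's pmf) \<Rightarrow> 's \<Rightarrow> 'a \<Rightarrow> ('s \<Rightarrow> real^'n::finite) \<Rightarrow> real^'n" where
  "Sg \<delta> s a g = (\<Sum>s'\<in>UNIV. pmf (\<delta> s a) s' *\<^sub>R g s')"

lemma Sg_comp: "Sg \<delta> s a g $ i = (\<Sum>s'\<in>UNIV. pmf (\<delta> s a) s' * g s' $ i)"
  unfolding Sg_def by simp

definition inbox :: "real^'n::finite \<Rightarrow> bool" where
  "inbox u \<longleftrightarrow> (\<forall>i. 0 \<le> u $ i \<and> u $ i \<le> 1)"

definition dcl :: "(real^'n::finite) set \<Rightarrow> bool" where
  "dcl X \<longleftrightarrow> (\<forall>u\<in>X. \<forall>y. (\<forall>i. 0 \<le> y $ i \<and> y $ i \<le> u $ i) \<longrightarrow> y \<in> X)"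

definition good :: "('s \<Rightarrow> (real^'n::finite) set) \<Rightarrow> bool" where
  "good L \<longleftrightarrow> (\<forall>s. 0 \<in> L s \<and> convex (L s) \<and> (\<forall>u\<in>L s. inbox u) \<and> dcl (L s))"

lemma Sg_nonneg:
  assumes "\<And>s'. \<forall>i. 0 \<le> g s' $ i"
  shows "0 \<le> Sg \<delta> s a g $ i"
  unfolding Sg_comp using assms by (intro sum_nonneg mult_nonneg_nonneg) auto

lemma Sg_le1:
  fixes \<delta> :: "'s::finite \<Rightarrow> 'a \<Rightarrow> 's pmf"
  assumes "\<And>s'. g s' $ i \<le> 1"
  shows "Sg \<delta> s a g $ i \<le> 1"
proof -
  have "Sg \<delta> s a g $ i \<le> (\<Sum>s'\<in>UNIV. pmf (\<delta> s a) s' * 1)"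
    unfolding Sg_comp using assms by (intro sum_mono mult_left_mono) auto
  then show ?thesis by (simp add: sum_pmf_UNIV)
qed

lemma f_act_iff:
  fixes \<delta> :: "'s::finite \<Rightarrow> 'a \<Rightarrow> 's pmf" and L :: "'s \<Rightarrow> (real^'n::finite) set"
  assumes nonneg0: "\<forall>s'. \<forall>u\<in>L s'. \<forall>i. 0 \<le> u $ i"
  shows "v \<in> f_act \<delta> T L s a \<longleftrightarrow> inbox v \<and> (\<exists>g. (\<forall>s'. g s' \<in> L s') \<and>
      (\<forall>i. if s \<in> T i then Sg \<delta> s a g $ i \<le> v $ i else v $ i = Sg \<delta> s a g $ i))"
proof
  assume "v \<in> f_act \<delta> T L s a"
  then obtain x g where v: "v = x + Sg \<delta> s a g" and x: "x \<in> dwc {indic_T T s}" and g: "\<forall>s'. g s' \<in> L s'"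
    and box: "v \<in> unit_box"
    unfolding f_act_def Sg_def by blast
  have xi: "0 \<le> x $ i \<and> x $ i \<le> (if s \<in> T i then 1 else 0)" for i
    using x unfolding dwc_def indic_T_def by auto
  have "inbox v" using box unfolding unit_box_def dwc_def inbox_def by auto
  moreover have "(if s \<in> T i then Sg \<delta> s a g $ i \<le> v $ i else v $ i = Sg \<delta> s a g $ i)" for i
    using xi[of i] unfolding v by auto
  ultimately show "inbox v \<and> (\<exists>g. (\<forall>s'. g s' \<in> L s') \<and>
      (\<forall>i. if s \<in> T i then Sg \<delta> s a g $ i \<le> v $ i else v $ i = Sg \<delta> s a g $ i))"
    using g by blast
next
  assume "inbox v \<and> (\<exists>g. (\<forall>s'. g s' \<in> L s') \<and>
      (\<forall>i. if s \<in> T i then Sg \<delta> s a g $ i \<le> v $ i else v $ i = Sg \<delta> s a g $ i))"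
  then obtain g where box: "inbox v" and g: "\<forall>s'. g s' \<in> L s'"
    and c: "\<And>i. if s \<in> T i then Sg \<delta> s a g $ i \<le> v $ i else v $ i = Sg \<delta> s a g $ i" by blast
  have nonneg: "\<And>s' u i. u \<in> L s' \<Longrightarrow> 0 \<le> u $ i" using nonneg0 by blast
  have S0: "0 \<le> Sg \<delta> s a g $ i" for i using g nonneg by (intro Sg_nonneg) auto
  define x where "x = v - Sg \<delta> s a g"
  have "x \<in> dwc {indic_T T s}"
    unfolding dwc_def indic_T_def x_def
  proof (intro CollectI conjI allI bexI[of _ "indic_T T s"])
    fix i
    show "0 \<le> (v - Sg \<delta> s a g) $ i" using c[of i] by (auto split: if_splits)
    show "(v - Sg \<delta> s a g) $ i \<le> indic_T T s $ i"
      using c[of i] box[unfolded inbox_def, rule_format, of i] S0[of i] unfolding indic_T_def by (auto split: if_splits)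
  qed (simp add: indic_T_def)
  moreover have "v \<in> unit_box" using box unfolding unit_box_def dwc_def inbox_def by auto
  ultimately show "v \<in> f_act \<delta> T L s a"
    unfolding f_act_def Sg_def[symmetric] using g
    by (intro IntI CollectI exI[of _ x] exI[of _ "Sg \<delta> s a g"]) (auto simp: x_def Sg_def)
qed

lemma ratio_facts:
  fixes y u :: real
  assumes "0 \<le> y" "y \<le> u"
  shows "0 \<le> (if u = 0 then 0 else y / u)" "(if u = 0 then 0 else y / u) \<le> 1"
    "y = (if u = 0 then 0 else y / u) * u"
  using assms by (auto simp: divide_le_eq_1)

lemma good_nonneg: "good L \<Longrightarrow> u \<in> L s \<Longrightarrow> 0 \<le> u $ i"
  and good_le1: "good L \<Longrightarrow> u \<in> L s \<Longrightarrow> u $ i \<le> 1"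
  unfolding good_def inbox_def by auto

lemma good_f_act:
  fixes \<delta> :: "'s::finite \<Rightarrow> 'a \<Rightarrow> 's pmf" and L :: "'s \<Rightarrow> (real^'n::finite) set"
  assumes G: "good L"
  shows "0 \<in> f_act \<delta> T L s a" "convex (f_act \<delta> T L s a)" "\<forall>u\<in>f_act \<delta> T L s a. inbox u"
    "dcl (f_act \<delta> T L s a)"
proof -
  have nn: "\<forall>s'. \<forall>u\<in>L s'. \<forall>i. 0 \<le> u $ i" using good_nonneg[OF G] by blast
  note iff = f_act_iff[OF nn]
  have L0: "0 \<in> L s'" for s' using G unfolding good_def by auto
  have S0: "Sg \<delta> s a (\<lambda>_. 0) = (0 :: real^'n)" unfolding Sg_def by simp
  show "0 \<in> f_act \<delta> T L s a"
    apply (subst iff)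
    apply (rule conjI)
     apply (simp add: inbox_def)
    apply (rule exI[of _ "\<lambda>_. 0 :: real^'n"])
    apply (simp add: S0 L0)
    done
  show "\<forall>u\<in>f_act \<delta> T L s a. inbox u"
  proof
    fix u assume "u \<in> f_act \<delta> T L s a"
    then show "inbox u" by (subst (asm) iff) blast
  qed
  show "convex (f_act \<delta> T L s a)"
    unfolding convex_def
  proof (intro ballI allI impI)
    fix x y :: "real^'n" and u v :: real
    assume x: "x \<in> f_act \<delta> T L s a" and y: "y \<in> f_act \<delta> T L s a" and uv: "0 \<le> u" "0 \<le> v" "u + v = 1"
    obtain g1 where g1: "\<forall>s'. g1 s' \<in> L s'" "\<And>i. if s \<in> T i then Sg \<delta> s a g1 $ i \<le> x $ i else x $ i = Sg \<delta> s a g1 $ i"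
      and bx: "inbox x" using x unfolding iff by blast
    obtain g2 where g2: "\<forall>s'. g2 s' \<in> L s'" "\<And>i. if s \<in> T i then Sg \<delta> s a g2 $ i \<le> y $ i else y $ i = Sg \<delta> s a g2 $ i"
      and by': "inbox y" using y unfolding iff by blast
    define g where "g s' = u *\<^sub>R g1 s' + v *\<^sub>R g2 s'" for s'
    have gL: "\<forall>s'. g s' \<in> L s'"
    proof
      fix s'
      have "convex (L s')" using G unfolding good_def by auto
      from convexD[OF this g1(1)[rule_format, of s'] g2(1)[rule_format, of s'] uv]
      show "g s' \<in> L s'" unfolding g_def .
    qed
    have Sgi: "Sg \<delta> s a g $ i = u * Sg \<delta> s a g1 $ i + v * Sg \<delta> s a g2 $ i" for i
      unfolding Sg_comp g_def by (simp add: sum.distrib sum_distrib_left algebra_simps)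
    have "inbox (u *\<^sub>R x + v *\<^sub>R y)"
      unfolding inbox_def
    proof
      fix i
      have "x $ i \<le> 1" "y $ i \<le> 1" using bx by' unfolding inbox_def by auto
      then have "u * x $ i \<le> u * 1" "v * y $ i \<le> v * 1"
        using uv by (auto intro: mult_left_mono simp del: mult_1_right)
      then show "0 \<le> (u *\<^sub>R x + v *\<^sub>R y) $ i \<and> (u *\<^sub>R x + v *\<^sub>R y) $ i \<le> 1"
        using bx by' uv unfolding inbox_def by simp
    qed
    moreover have "if s \<in> T i then Sg \<delta> s a g $ i \<le> (u *\<^sub>R x + v *\<^sub>R y) $ i
        else (u *\<^sub>R x + v *\<^sub>R y) $ i = Sg \<delta> s a g $ i" for i
      using g1(2)[of i] g2(2)[of i] uv unfolding Sgi
      by (auto split: if_splits intro!: add_mono mult_left_mono)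
    ultimately show "u *\<^sub>R x + v *\<^sub>R y \<in> f_act \<delta> T L s a" unfolding iff using gL by blast
  qed
  show "dcl (f_act \<delta> T L s a)"
    unfolding dcl_def
  proof (intro ballI allI impI)
    fix u y :: "real^'n"
    assume u: "u \<in> f_act \<delta> T L s a" and y: "\<forall>i. 0 \<le> y $ i \<and> y $ i \<le> u $ i"
    obtain g where g: "\<forall>s'. g s' \<in> L s'" "\<And>i. if s \<in> T i then Sg \<delta> s a g $ i \<le> u $ i else u $ i = Sg \<delta> s a g $ i"
      and bu: "inbox u" using u unfolding iff by blast
    define r where "r i = (if u $ i = 0 then 0 else y $ i / u $ i)" for i
    have r: "0 \<le> r i" "r i \<le> 1" "y $ i = r i * u $ i" for i
      using ratio_facts[of "y $ i" "u $ i"] y unfolding r_def by auto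
    define g' where "g' s' = (\<chi> i. r i * g s' $ i)" for s'
    have g'L: "g' s' \<in> L s'" for s'
    proof -
      have "dcl (L s')" using G unfolding good_def by auto
      moreover have "0 \<le> g' s' $ i \<and> g' s' $ i \<le> g s' $ i" for i
        using r[of i] good_nonneg[OF G, of "g s'" s' i] g(1) unfolding g'_def
        by (auto intro: mult_left_le_one_le)
      ultimately show ?thesis using g(1) unfolding dcl_def by blast
    qed
    have Sgi: "Sg \<delta> s a g' $ i = r i * Sg \<delta> s a g $ i" for i
      unfolding Sg_comp g'_def by (simp add: sum_distrib_left algebra_simps)
    have "inbox y" using y bu unfolding inbox_def by (auto intro: order_trans)
    moreover have "if s \<in> T i then Sg \<delta> s a g' $ i \<le> y $ i else y $ i = Sg \<delta> s a g' $ i" for i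
      using g(2)[of i] r[of i] unfolding Sgi by (auto split: if_splits intro: mult_left_mono)
    ultimately show "y \<in> f_act \<delta> T L s a" unfolding iff using g'L by blast
  qed
qed


lemma hull_rep:
  fixes \<delta> :: "'s::finite \<Rightarrow> 'a::finite \<Rightarrow> 's pmf" and L :: "'s \<Rightarrow> (real^'n::finite) set"
  assumes G: "good L" and Av: "Av s \<noteq> {}"
  shows "convex hull (\<Union>a\<in>Av s. f_act \<delta> T L s a) =
    {\<Sum>a\<in>Av s. c a *\<^sub>R z a | c z. (\<forall>a\<in>Av s. c a \<ge> 0) \<and> sum c (Av s) = 1 \<and> (\<forall>a\<in>Av s. z a \<in> f_act \<delta> T L s a)}"
proof -
  have "\<forall>a\<in>Av s. convex (f_act \<delta> T L s a) \<and> f_act \<delta> T L s a \<noteq> {}"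
  proof
    fix a
    have "0 \<in> f_act \<delta> T L s a" by (rule good_f_act(1)[OF G])
    moreover have "convex (f_act \<delta> T L s a)" by (rule good_f_act(2)[OF G])
    ultimately show "convex (f_act \<delta> T L s a) \<and> f_act \<delta> T L s a \<noteq> {}" by auto
  qed
  then show ?thesis by (rule convex_hull_finite_union[OF finite])
qed

lemma good_bellman:
  fixes \<delta> :: "'s::finite \<Rightarrow> 'a::finite \<Rightarrow> 's pmf" and L :: "'s \<Rightarrow> (real^'n::finite) set"
  assumes G: "good L" and Av: "\<And>s. Av s \<noteq> {}"
  shows "good (bellman Smax Av \<delta> T L)"
  unfolding good_def
proof (intro allI)
  fix s
  obtain a0 where a0: "a0 \<in> Av s" using Av by blast
  note F = good_f_act[OF G, of \<delta> T s]
  show "0 \<in> bellman Smax Av \<delta> T L s \<and> convex (bellman Smax Av \<delta> T L s) \<and>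
    (\<forall>u\<in>bellman Smax Av \<delta> T L s. inbox u) \<and> dcl (bellman Smax Av \<delta> T L s)"
  proof (cases "s \<in> Smax")
    case True
    let ?B = "convex hull (\<Union>a\<in>Av s. f_act \<delta> T L s a)"
    have B: "bellman Smax Av \<delta> T L s = ?B" using True unfolding bellman_def by simp
    note rep = hull_rep[where Av=Av and s=s, OF G Av[of s]]
    have "0 \<in> ?B" using F(1)[of a0] a0 by (intro hull_inc) blast
    moreover have "inbox u" if uB0: "u \<in> ?B" for u
    proof -
      from uB0[unfolded rep] obtain c z where u: "u = (\<Sum>a\<in>Av s. c a *\<^sub>R z a)" and c: "\<forall>a\<in>Av s. c a \<ge> 0" "sum c (Av s) = 1"
        and z: "\<forall>a\<in>Av s. z a \<in> f_act \<delta> T L s a" by blast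
      have zb: "0 \<le> z a $ i \<and> z a $ i \<le> 1" if "a \<in> Av s" for a i
        using F(3) z that unfolding inbox_def by blast
      show ?thesis unfolding inbox_def
      proof
        fix i
        have "(\<Sum>a\<in>Av s. c a * z a $ i) \<le> (\<Sum>a\<in>Av s. c a * 1)"
          using c zb by (intro sum_mono mult_left_mono) auto
        moreover have "0 \<le> (\<Sum>a\<in>Av s. c a * z a $ i)"
          using c zb by (intro sum_nonneg mult_nonneg_nonneg) auto
        ultimately show "0 \<le> u $ i \<and> u $ i \<le> 1" unfolding u using c by simp
      qed
    qed
    moreover have "dcl ?B"
      unfolding dcl_def
    proof (intro ballI allI impI)
      fix u y assume uB: "u \<in> ?B" and y: "\<forall>i. 0 \<le> y $ i \<and> y $ i \<le> u $ i"
      obtain c z where u: "u = (\<Sum>a\<in>Av s. c a *\<^sub>R z a)" and c: "\<forall>a\<in>Av s. c a \<ge> 0" "sum c (Av s) = 1"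
        and z: "\<forall>a\<in>Av s. z a \<in> f_act \<delta> T L s a" using uB[unfolded rep] by blast
      define r where "r i = (if u $ i = 0 then 0 else y $ i / u $ i)" for i
      have r: "0 \<le> r i" "r i \<le> 1" "y $ i = r i * u $ i" for i
        using ratio_facts[of "y $ i" "u $ i"] y unfolding r_def by auto
      define z' where "z' a = (\<chi> i. r i * z a $ i)" for a
      have z': "z' a \<in> f_act \<delta> T L s a" if "a \<in> Av s" for a
      proof -
        have zb: "0 \<le> z a $ i" for i using F(3) z that unfolding inbox_def by blast
        have "0 \<le> z' a $ i \<and> z' a $ i \<le> z a $ i" for i
          using r[of i] zb[of i] unfolding z'_def by (auto intro: mult_left_le_one_le)
        then show ?thesis using F(4)[of a] z that unfolding dcl_def by blast
      qed
      have "y = (\<Sum>a\<in>Av s. c a *\<^sub>R z' a)"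
      proof (subst vec_eq_iff, intro allI)
        fix i
        have "(\<Sum>a\<in>Av s. c a *\<^sub>R z' a) $ i = r i * (\<Sum>a\<in>Av s. c a * z a $ i)"
          unfolding z'_def by (simp add: sum_distrib_left algebra_simps)
        also have "\<dots> = y $ i" using r[of i] unfolding u by simp
        finally show "y $ i = (\<Sum>a\<in>Av s. c a *\<^sub>R z' a) $ i" by simp
      qed
      then show "y \<in> ?B" unfolding rep using c z' by blast
    qed
    ultimately show ?thesis unfolding B by simp
  next
    case False
    let ?B = "\<Inter>a\<in>Av s. f_act \<delta> T L s a"
    have B: "bellman Smax Av \<delta> T L s = ?B" using False unfolding bellman_def by simp
    have "0 \<in> ?B" using F(1) by blast
    moreover have "convex ?B" using F(2) by (intro convex_INT)
    moreover have "\<forall>u\<in>?B. inbox u" using F(3) a0 by blast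
    moreover have "dcl ?B" using F(4) unfolding dcl_def by blast
    ultimately show ?thesis unfolding B by simp
  qed
qed

lemma bvi_L_0: "bvi_L Smax Av \<delta> T 0 = (\<lambda>s. {0})"
  unfolding bvi_L_def by simp

lemma bvi_L_Suc: "bvi_L Smax Av \<delta> T (Suc j) = bellman Smax Av \<delta> T (bvi_L Smax Av \<delta> T j)"
  unfolding bvi_L_def by simp

lemma good_bvi_L:
  fixes \<delta> :: "'s::finite \<Rightarrow> 'a::finite \<Rightarrow> 's pmf" and T :: "'n::finite \<Rightarrow> 's set"
  assumes Av: "\<And>s. Av s \<noteq> {}"
  shows "good (bvi_L Smax Av \<delta> T j)"
proof (induction j)
  case 0
  show ?case unfolding bvi_L_0 good_def dcl_def inbox_def by (auto simp: vec_eq_iff intro: antisym)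
next
  case (Suc j)
  then show ?case unfolding bvi_L_Suc by (intro good_bellman Av)
qed

lemma Rf_le1:
  fixes \<delta> :: "'s::finite \<Rightarrow> 'a::finite \<Rightarrow> 's pmf"
  shows "Rf Smax \<delta> \<sigma> \<tau> h s k Tg \<le> 1"
proof (induction k arbitrary: h s)
  case (Suc k)
  have "(\<Sum>a\<in>UNIV. pmf (stc Smax \<sigma> \<tau> h s) a * (\<Sum>s'\<in>UNIV. pmf (\<delta> s a) s' * Rf Smax \<delta> \<sigma> \<tau> (h @ [(s, a)]) s' k Tg))
     \<le> (\<Sum>a\<in>UNIV. pmf (stc Smax \<sigma> \<tau> h s) a * (\<Sum>s'\<in>UNIV. pmf (\<delta> s a) s' * 1))"
    using Suc.IH by (intro sum_mono mult_left_mono) auto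
  then show ?case by (simp add: sum_pmf_UNIV)
qed simp

lemma Rf_mono_Suc:
  fixes \<delta> :: "'s::finite \<Rightarrow> 'a::finite \<Rightarrow> 's pmf"
  shows "Rf Smax \<delta> \<sigma> \<tau> h s k Tg \<le> Rf Smax \<delta> \<sigma> \<tau> h s (Suc k) Tg"
proof (induction k arbitrary: h s)
  case 0
  show ?case by (auto intro!: sum_nonneg mult_nonneg_nonneg Rf_nonneg)
next
  case (Suc k)
  have "(\<Sum>a\<in>UNIV. pmf (stc Smax \<sigma> \<tau> h s) a * (\<Sum>s'\<in>UNIV. pmf (\<delta> s a) s' * Rf Smax \<delta> \<sigma> \<tau> (h @ [(s, a)]) s' k Tg))
     \<le> (\<Sum>a\<in>UNIV. pmf (stc Smax \<sigma> \<tau> h s) a * (\<Sum>s'\<in>UNIV. pmf (\<delta> s a) s' * Rf Smax \<delta> \<sigma> \<tau> (h @ [(s, a)]) s' (Suc k) Tg))"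
    using Suc.IH by (intro sum_mono mult_left_mono) auto
  then show ?case by simp
qed

lemma Rf_mono:
  fixes \<delta> :: "'s::finite \<Rightarrow> 'a::finite \<Rightarrow> 's pmf"
  assumes "k \<le> m"
  shows "Rf Smax \<delta> \<sigma> \<tau> h s k Tg \<le> Rf Smax \<delta> \<sigma> \<tau> h s m Tg"
  using assms
proof (induction m)
  case (Suc m)
  then show ?case using Rf_mono_Suc[of Smax \<delta> \<sigma> \<tau> h s m Tg] by (auto simp: le_Suc_eq)
qed simp

definition first :: "('s \<times> 'a) list \<Rightarrow> 's \<Rightarrow> 's" where
  "first r t = (case r of [] \<Rightarrow> t | p # _ \<Rightarrow> fst p)"

lemma first_simps[simp]: "first [] t = t" "first (p # r) t = fst p"
  unfolding first_def by auto

lemma Rf_local: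
  fixes \<sigma> \<tau> \<sigma>' \<tau>' :: "('s, 'a) strat"
  assumes "\<And>(r :: ('s \<times> 'a) list) t. length r \<le> k \<Longrightarrow> first r t = s \<Longrightarrow> stc Smax \<sigma> \<tau> (h @ r) t = stc Smax \<sigma>' \<tau>' (h @ r) t"
  shows "Rf Smax \<delta> \<sigma> \<tau> h s k Tg = Rf Smax \<delta> \<sigma>' \<tau>' h s k Tg"
  using assms
proof (induction k arbitrary: h s)
  case (Suc k)
  have e: "stc Smax \<sigma> \<tau> h s = stc Smax \<sigma>' \<tau>' h s" using Suc.prems[of "[]" s] by simp
  have "Rf Smax \<delta> \<sigma> \<tau> (h @ [(s, a)]) s' k Tg = Rf Smax \<delta> \<sigma>' \<tau>' (h @ [(s, a)]) s' k Tg" for a s'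
  proof (rule Suc.IH)
    fix r :: "('s \<times> 'a) list" and t assume "length r \<le> k" "first r t = s'"
    then show "stc Smax \<sigma> \<tau> ((h @ [(s, a)]) @ r) t = stc Smax \<sigma>' \<tau>' ((h @ [(s, a)]) @ r) t"
      using Suc.prems[of "(s, a) # r" t] by simp
  qed
  then show ?case using e by simp
qed simp

definition glue :: "('s \<times> 'a) list \<Rightarrow> 's \<Rightarrow> ('a \<Rightarrow> 's \<Rightarrow> ('s \<times> 'a) list \<Rightarrow> 's \<Rightarrow> 'b)
    \<Rightarrow> (('s \<times> 'a) list \<Rightarrow> 's \<Rightarrow> 'b) \<Rightarrow> 'b \<Rightarrow> ('s \<times> 'a) list \<Rightarrow> 's \<Rightarrow> 'b" where
  "glue h s F d b h'' t = (if h'' = h \<and> t = s then b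
     else if length h < length h'' \<and> take (length h) h'' = h
       then F (snd (h'' ! length h)) (first (drop (Suc (length h)) h'') t) h'' t
     else d h'' t)"

lemma glue_sub: "glue h s F d b ((h @ [(s, a)]) @ r) t = F a (first r t) ((h @ [(s, a)]) @ r) t"
  unfolding glue_def by (simp add: nth_append)

lemma glue_sub': "glue h s F d b (h @ (s, a) # r) t = F a (first r t) (h @ (s, a) # r) t"
  using glue_sub[of h s F d b a r t] by simp

lemma glue_here: "glue h s F d b h s = b"
  unfolding glue_def by simp

lemma glue_cases: "glue h s F d b h'' t = b \<or> (\<exists>a s'. glue h s F d b h'' t = F a s' h'' t) \<or> glue h s F d b h'' t = d h'' t"
  unfolding glue_def by auto

lemma Rf_glue_sigma:
  "Rf Smax \<delta> (glue h s F d b) \<tau> (h @ [(s, a)]) s' k Tg = Rf Smax \<delta> (F a s') \<tau> (h @ [(s, a)]) s' k Tg"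
  by (rule Rf_local) (simp add: stc_def glue_sub')

lemma Rf_glue_tau:
  "Rf Smax \<delta> \<sigma> (glue h s F d b) (h @ [(s, a)]) s' k Tg = Rf Smax \<delta> \<sigma> (F a s') (h @ [(s, a)]) s' k Tg"
  by (rule Rf_local) (simp add: stc_def glue_sub')

definition sdef :: "('s \<Rightarrow> 'a set) \<Rightarrow> ('s, 'a) strat" where
  "sdef Av h t = return_pmf (SOME a. a \<in> Av t)"

lemma sdef_valid: "(\<And>s. Av s \<noteq> {}) \<Longrightarrow> is_strategy Av P (sdef Av)"
  unfolding is_strategy_def sdef_def by (auto simp: some_in_eq)

lemma glue_valid:
  assumes "\<And>a s'. is_strategy Av P (F a s')" "is_strategy Av P d" "s \<in> P \<Longrightarrow> set_pmf b \<subseteq> Av s"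
  shows "is_strategy Av P (glue h s F d b)"
  unfolding is_strategy_def
proof (intro allI impI)
  fix h'' t assume "t \<in> P"
  show "set_pmf (glue h s F d b h'' t) \<subseteq> Av t"
    using glue_cases[of h s F d b h'' t] assms \<open>t \<in> P\<close> unfolding is_strategy_def
    by (auto simp: glue_def split: if_splits)
qed

lemma pmf_embed_finite:
  fixes f :: "'a::finite \<Rightarrow> real"
  assumes "\<And>a. 0 \<le> f a" "(\<Sum>a\<in>UNIV. f a) = 1"
  shows "pmf (embed_pmf f) a = f a"
proof (rule pmf_embed_pmf)
  show "0 \<le> f x" for x by (rule assms(1))
  have "(\<integral>\<^sup>+x. ennreal (f x) \<partial>count_space UNIV) = (\<Sum>x\<in>UNIV. ennreal (f x))"
    by (rule nn_integral_count_space_finite) simp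
  also have "\<dots> = 1" using assms by simp
  finally show "(\<integral>\<^sup>+x. ennreal (f x) \<partial>count_space UNIV) = 1" .
qed

lemma sum_UNIV_if:
  fixes f :: "'a::finite \<Rightarrow> real"
  shows "(\<Sum>a\<in>UNIV. if a \<in> A then f a else 0) = (\<Sum>a\<in>A. f a)"
  by (simp add: sum.If_cases)

lemma claimA:
  fixes \<delta> :: "'s::finite \<Rightarrow> 'a::finite \<Rightarrow> 's pmf" and T :: "'n::finite \<Rightarrow> 's set"
  assumes Av: "\<And>s. Av s \<noteq> {}"
  shows "v \<in> bvi_L Smax Av \<delta> T j s \<Longrightarrow> \<exists>\<sigma>. is_strategy Av Smax \<sigma> \<and>
    (\<forall>\<tau>. is_strategy Av (-Smax) \<tau> \<longrightarrow> (\<forall>i. v $ i \<le> Rf Smax \<delta> \<sigma> \<tau> h s j (T i)))"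
proof (induction j arbitrary: h s v)
  case 0
  then have "v = 0" by (simp add: bvi_L_0)
  then show ?case using sdef_valid[OF Av] Rf_nonneg by (intro exI[of _ "sdef Av"]) auto
next
  case (Suc j)
  let ?L = "bvi_L Smax Av \<delta> T j"
  have G: "good ?L" by (rule good_bvi_L[OF Av])
  have GB: "good (bvi_L Smax Av \<delta> T (Suc j))" by (rule good_bvi_L[OF Av])
  have vB: "v \<in> bellman Smax Av \<delta> T ?L s" using Suc.prems unfolding bvi_L_Suc .
  have v1: "v $ i \<le> 1" for i using good_le1[OF GB Suc.prems] .
  have nn: "\<forall>s'. \<forall>u\<in>?L s'. \<forall>i. 0 \<le> u $ i" using good_nonneg[OF G] by blast
  note iff = f_act_iff[OF nn]
  have L0: "0 \<in> ?L s'" for s' using G unfolding good_def by auto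
  have succ: "\<exists>FF. \<forall>a s'. is_strategy Av Smax (FF a s') \<and> (\<forall>\<tau>. is_strategy Av (-Smax) \<tau> \<longrightarrow>
      (\<forall>i. gg a s' $ i \<le> Rf Smax \<delta> (FF a s') \<tau> (h @ [(s, a)]) s' j (T i)))"
    if gg: "\<forall>a s'. gg a s' \<in> ?L s'" for gg
  proof -
    have "\<forall>a s'. \<exists>\<sigma>. is_strategy Av Smax \<sigma> \<and> (\<forall>\<tau>. is_strategy Av (-Smax) \<tau> \<longrightarrow>
      (\<forall>i. gg a s' $ i \<le> Rf Smax \<delta> \<sigma> \<tau> (h @ [(s, a)]) s' j (T i)))"
      using Suc.IH gg by blast
    then show ?thesis by metis
  qed
  show ?case
  proof (cases "s \<in> Smax")
    case True
    note rep = hull_rep[where Av=Av and s=s, OF G Av[of s]]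
    from vB True obtain c z where v: "v = (\<Sum>a\<in>Av s. c a *\<^sub>R z a)" and c: "\<forall>a\<in>Av s. c a \<ge> 0" "sum c (Av s) = 1"
        and z: "\<forall>a\<in>Av s. z a \<in> f_act \<delta> T ?L s a" unfolding bellman_def rep by auto
    have "\<forall>a. \<exists>g. (\<forall>s'. g s' \<in> ?L s') \<and> (a \<in> Av s \<longrightarrow> (\<forall>i. s \<notin> T i \<longrightarrow> z a $ i = Sg \<delta> s a g $ i))"
    proof
      fix a
      show "\<exists>g. (\<forall>s'. g s' \<in> ?L s') \<and> (a \<in> Av s \<longrightarrow> (\<forall>i. s \<notin> T i \<longrightarrow> z a $ i = Sg \<delta> s a g $ i))"
      proof (cases "a \<in> Av s")
        case True
        then have "z a \<in> f_act \<delta> T ?L s a" using z by blast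
        then obtain g where "\<forall>s'. g s' \<in> ?L s'" "\<forall>i. if s \<in> T i then Sg \<delta> s a g $ i \<le> z a $ i else z a $ i = Sg \<delta> s a g $ i"
          by (subst (asm) iff) blast
        then show ?thesis by (intro exI[of _ g]) auto
      next
        case False
        then show ?thesis using L0 by (intro exI[of _ "\<lambda>_. 0"]) auto
      qed
    qed
    then obtain gg where gg: "\<forall>a s'. gg a s' \<in> ?L s'"
      and ggz: "\<And>a i. a \<in> Av s \<Longrightarrow> s \<notin> T i \<Longrightarrow> z a $ i = Sg \<delta> s a (gg a) $ i" by metis
    obtain FF where FF: "\<And>a s'. is_strategy Av Smax (FF a s')"
      and FFg: "\<And>a s' \<tau> i. is_strategy Av (-Smax) \<tau> \<Longrightarrow> gg a s' $ i \<le> Rf Smax \<delta> (FF a s') \<tau> (h @ [(s, a)]) s' j (T i)"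
      using succ[OF gg] by blast
    define p where "p = embed_pmf (\<lambda>a. if a \<in> Av s then c a else 0)"
    have pmf_p: "pmf p a = (if a \<in> Av s then c a else 0)" for a
      unfolding p_def using c by (intro pmf_embed_finite) (auto simp: sum_UNIV_if)
    have setp: "set_pmf p \<subseteq> Av s" using pmf_p by (auto simp: set_pmf_iff split: if_splits)
    define \<sigma> where "\<sigma> = glue h s FF (sdef Av) p"
    have \<sigma>v: "is_strategy Av Smax \<sigma>" unfolding \<sigma>_def using FF sdef_valid[OF Av] setp by (intro glue_valid)
    have "v $ i \<le> Rf Smax \<delta> \<sigma> \<tau> h s (Suc j) (T i)" if \<tau>: "is_strategy Av (-Smax) \<tau>" for \<tau> i
    proof (cases "s \<in> T i")
      case True
      then show ?thesis using v1[of i] by simp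
    next
      case False
      have st: "stc Smax \<sigma> \<tau> h s = p" using \<open>s \<in> Smax\<close> unfolding stc_def \<sigma>_def by (simp add: glue_here)
      have "v $ i = (\<Sum>a\<in>Av s. c a * z a $ i)" unfolding v by simp
      also have "\<dots> = (\<Sum>a\<in>UNIV. if a \<in> Av s then c a * z a $ i else 0)" by (simp add: sum_UNIV_if)
      also have "\<dots> = (\<Sum>a\<in>UNIV. pmf p a * Sg \<delta> s a (gg a) $ i)"
        using ggz False by (intro sum.cong) (auto simp: pmf_p)
      also have "\<dots> \<le> (\<Sum>a\<in>UNIV. pmf p a * (\<Sum>s'\<in>UNIV. pmf (\<delta> s a) s' * Rf Smax \<delta> \<sigma> \<tau> (h @ [(s, a)]) s' j (T i)))"
        unfolding Sg_comp \<sigma>_def Rf_glue_sigma using FFg[OF \<tau>]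
        by (intro sum_mono mult_left_mono) auto
      also have "\<dots> = Rf Smax \<delta> \<sigma> \<tau> h s (Suc j) (T i)" using False st by simp
      finally show ?thesis .
    qed
    then show ?thesis using \<sigma>v by blast
  next
    case False
    have vF: "v \<in> f_act \<delta> T ?L s a" if "a \<in> Av s" for a
      using vB False that unfolding bellman_def by auto
    have "\<forall>a. \<exists>g. (\<forall>s'. g s' \<in> ?L s') \<and> (a \<in> Av s \<longrightarrow> (\<forall>i. s \<notin> T i \<longrightarrow> v $ i = Sg \<delta> s a g $ i))"
    proof
      fix a
      show "\<exists>g. (\<forall>s'. g s' \<in> ?L s') \<and> (a \<in> Av s \<longrightarrow> (\<forall>i. s \<notin> T i \<longrightarrow> v $ i = Sg \<delta> s a g $ i))"
      proof (cases "a \<in> Av s")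
        case True
        then have "v \<in> f_act \<delta> T ?L s a" using vF by blast
        then obtain g where "\<forall>s'. g s' \<in> ?L s'" "\<forall>i. if s \<in> T i then Sg \<delta> s a g $ i \<le> v $ i else v $ i = Sg \<delta> s a g $ i"
          by (subst (asm) iff) blast
        then show ?thesis by (intro exI[of _ g]) auto
      next
        case False
        then show ?thesis using L0 by (intro exI[of _ "\<lambda>_. 0"]) auto
      qed
    qed
    then obtain gg where gg: "\<forall>a s'. gg a s' \<in> ?L s'"
      and ggv: "\<And>a i. a \<in> Av s \<Longrightarrow> s \<notin> T i \<Longrightarrow> v $ i = Sg \<delta> s a (gg a) $ i" by metis
    obtain FF where FF: "\<And>a s'. is_strategy Av Smax (FF a s')"
      and FFg: "\<And>a s' \<tau> i. is_strategy Av (-Smax) \<tau> \<Longrightarrow> gg a s' $ i \<le> Rf Smax \<delta> (FF a s') \<tau> (h @ [(s, a)]) s' j (T i)"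
      using succ[OF gg] by blast
    define \<sigma> where "\<sigma> = glue h s FF (sdef Av) (sdef Av h s)"
    have \<sigma>v: "is_strategy Av Smax \<sigma>" unfolding \<sigma>_def using FF sdef_valid[OF Av] False by (intro glue_valid) auto
    have "v $ i \<le> Rf Smax \<delta> \<sigma> \<tau> h s (Suc j) (T i)" if \<tau>: "is_strategy Av (-Smax) \<tau>" for \<tau> i
    proof (cases "s \<in> T i")
      case True
      then show ?thesis using v1[of i] by simp
    next
      case nT: False
      have st: "stc Smax \<sigma> \<tau> h s = \<tau> h s" using False unfolding stc_def by simp
      have tA: "set_pmf (\<tau> h s) \<subseteq> Av s" using \<tau> False unfolding is_strategy_def by auto
      have "v $ i = (\<Sum>a\<in>UNIV. pmf (\<tau> h s) a * v $ i)" by (simp add: sum_distrib_right[symmetric] sum_pmf_UNIV)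
      also have "\<dots> \<le> (\<Sum>a\<in>UNIV. pmf (\<tau> h s) a * (\<Sum>s'\<in>UNIV. pmf (\<delta> s a) s' * Rf Smax \<delta> \<sigma> \<tau> (h @ [(s, a)]) s' j (T i)))"
      proof (intro sum_mono)
        fix a
        show "pmf (\<tau> h s) a * v $ i \<le> pmf (\<tau> h s) a * (\<Sum>s'\<in>UNIV. pmf (\<delta> s a) s' * Rf Smax \<delta> \<sigma> \<tau> (h @ [(s, a)]) s' j (T i))"
        proof (cases "a \<in> set_pmf (\<tau> h s)")
          case True
          then have aA: "a \<in> Av s" using tA by blast
          have "v $ i = (\<Sum>s'\<in>UNIV. pmf (\<delta> s a) s' * gg a s' $ i)" using ggv[OF aA nT] unfolding Sg_comp .
          also have "\<dots> \<le> (\<Sum>s'\<in>UNIV. pmf (\<delta> s a) s' * Rf Smax \<delta> \<sigma> \<tau> (h @ [(s, a)]) s' j (T i))"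
            unfolding \<sigma>_def Rf_glue_sigma using FFg[OF \<tau>] by (intro sum_mono mult_left_mono) auto
          finally show ?thesis by (intro mult_left_mono) auto
        next
          case False
          then show ?thesis by (simp add: set_pmf_iff)
        qed
      qed
      also have "\<dots> = Rf Smax \<delta> \<sigma> \<tau> h s (Suc j) (T i)" using nT st by simp
      finally show ?thesis .
    qed
    then show ?thesis using \<sigma>v by blast
  qed
qed

definition pure :: "(('s \<times> 'a) list \<Rightarrow> 's \<Rightarrow> 'a) \<Rightarrow> ('s, 'a) strat" where
  "pure \<pi> h t = return_pmf (\<pi> h t)"

definition validp :: "'s set \<Rightarrow> ('s \<Rightarrow> 'a set) \<Rightarrow> (('s \<times> 'a) list \<Rightarrow> 's \<Rightarrow> 'a) \<Rightarrow> bool" where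
  "validp Smax Av \<pi> \<longleftrightarrow> (\<forall>h t. t \<notin> Smax \<longrightarrow> \<pi> h t \<in> Av t)"

definition pdef :: "('s \<Rightarrow> 'a set) \<Rightarrow> ('s \<times> 'a) list \<Rightarrow> 's \<Rightarrow> 'a" where
  "pdef Av h t = (SOME a. a \<in> Av t)"

lemma pdef_valid: "(\<And>s. Av s \<noteq> {}) \<Longrightarrow> validp Smax Av (pdef Av)"
  unfolding validp_def pdef_def by (auto simp: some_in_eq)

lemma pure_valid: "validp Smax Av \<pi> \<Longrightarrow> is_strategy Av (-Smax) (pure \<pi>)"
  unfolding validp_def is_strategy_def pure_def by auto

lemma glue_validp:
  assumes "\<And>a s'. validp Smax Av (PP a s')" "validp Smax Av d" "s \<notin> Smax \<Longrightarrow> b \<in> Av s"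
  shows "validp Smax Av (glue h s PP d b)"
  using assms unfolding validp_def glue_def by auto

lemma Rf_glue_pure:
  "Rf Smax \<delta> \<sigma> (pure (glue h s PP d b)) (h @ [(s, a)]) s' k Tg = Rf Smax \<delta> \<sigma> (pure (PP a s')) (h @ [(s, a)]) s' k Tg"
  by (rule Rf_local) (simp add: stc_def pure_def glue_sub')

lemma sum_eps:
  fixes w :: "'x::finite \<Rightarrow> real"
  shows "(\<Sum>x\<in>UNIV. pmf q x * (w x + e)) = (\<Sum>x\<in>UNIV. pmf q x * w x) + e"
  by (simp add: distrib_left sum.distrib sum_distrib_right[symmetric] sum_pmf_UNIV)

lemma claimB:
  fixes \<delta> :: "'s::finite \<Rightarrow> 'a::finite \<Rightarrow> 's pmf" and T :: "'n::finite \<Rightarrow> 's set"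
  assumes Av: "\<And>s. Av s \<noteq> {}" and \<sigma>v: "is_strategy Av Smax \<sigma>"
  shows "(\<forall>i. 0 \<le> y $ i) \<Longrightarrow> (\<forall>\<pi>. validp Smax Av \<pi> \<longrightarrow> (\<forall>i. y $ i \<le> Rf Smax \<delta> \<sigma> (pure \<pi>) h s k (T i)))
    \<Longrightarrow> y \<in> bvi_L Smax Av \<delta> T (Suc k) s"
proof (induction k arbitrary: h s y)
  case 0
  have pv: "validp Smax Av (pdef Av)" by (rule pdef_valid[OF Av])
  have yi: "0 \<le> y $ i \<and> y $ i \<le> (if s \<in> T i then 1 else 0)" for i
    using "0.prems"(1) "0.prems"(2)[rule_format, OF pv, of i] by simp
  have G0: "good (\<lambda>s::'s. {0 :: real^'n})" unfolding good_def dcl_def inbox_def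
    by (auto simp: vec_eq_iff intro: antisym)
  have nn: "\<forall>s'. \<forall>u\<in>(\<lambda>s::'s. {0 :: real^'n}) s'. \<forall>i. 0 \<le> u $ i" by simp
  have yF: "y \<in> f_act \<delta> T (\<lambda>_. {0}) s a" for a
  proof (subst f_act_iff[OF nn], intro conjI exI[of _ "\<lambda>_. 0 :: real^'n"])
    show "inbox y" unfolding inbox_def
    proof
      fix i show "0 \<le> y $ i \<and> y $ i \<le> 1" using yi[of i] by (auto split: if_splits)
    qed
    show "\<forall>s'. (0 :: real^'n) \<in> {0}" by simp
    show "\<forall>i. if s \<in> T i then Sg \<delta> s a (\<lambda>_. 0) $ i \<le> y $ i else y $ i = Sg \<delta> s a (\<lambda>_. 0) $ i"
    proof
      fix i show "if s \<in> T i then Sg \<delta> s a (\<lambda>_. 0) $ i \<le> y $ i else y $ i = Sg \<delta> s a (\<lambda>_. 0) $ i"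
        using yi[of i] by (auto simp: Sg_def split: if_splits)
    qed
  qed
  obtain a0 where a0: "a0 \<in> Av s" using Av by blast
  show ?case unfolding bvi_L_Suc bvi_L_0 bellman_def
    using yF a0 by (auto intro: hull_inc)
next
  case (Suc k)
  let ?L = "bvi_L Smax Av \<delta> T (Suc k)"
  have GL: "good ?L" by (rule good_bvi_L[OF Av])
  have GB: "good (bvi_L Smax Av \<delta> T (Suc (Suc k)))" by (rule good_bvi_L[OF Av])
  have pv: "validp Smax Av (pdef Av)" by (rule pdef_valid[OF Av])
  have y1: "y $ i \<le> 1" for i
    using Suc.prems(2)[rule_format, OF pv, of i] Rf_le1[of Smax \<delta> \<sigma> "pure (pdef Av)" h s "Suc k" "T i"] by simp
  define RS where "RS a s' i = {Rf Smax \<delta> \<sigma> (pure \<pi>) (h @ [(s, a)]) s' k (T i) | \<pi>. validp Smax Av \<pi>}" for a s' i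
  define W where "W a s' = (\<chi> i. Inf (RS a s' i))" for a s'
  have RSne: "RS a s' i \<noteq> {}" for a s' i unfolding RS_def using pv by blast
  have RSbdd: "bdd_below (RS a s' i)" for a s' i unfolding RS_def by (rule bdd_belowI[of _ 0]) (auto simp: Rf_nonneg)
  have Wlow: "W a s' $ i \<le> Rf Smax \<delta> \<sigma> (pure \<pi>) (h @ [(s, a)]) s' k (T i)" if "validp Smax Av \<pi>" for a s' i \<pi>
    unfolding W_def using RSbdd that by (auto intro!: cInf_lower simp: RS_def)
  have W0: "0 \<le> W a s' $ i" for a s' i
    unfolding W_def using RSne by (auto intro!: cInf_greatest simp: RS_def Rf_nonneg)
  have W1: "W a s' $ i \<le> 1" for a s' i
    using Wlow[OF pv, of a s' i] Rf_le1[of Smax \<delta> \<sigma> "pure (pdef Av)" "h @ [(s, a)]" s' k "T i"] by simp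
  have WL: "W a s' \<in> ?L s'" for a s'
    using W0 Wlow by (intro Suc.IH) auto
  have key: "\<exists>PP. (\<forall>a s'. validp Smax Av (PP a s')) \<and>
      (\<forall>a s'. Rf Smax \<delta> \<sigma> (pure (PP a s')) (h @ [(s, a)]) s' k (T i) < W a s' $ i + e)" if e: "0 < e" for i e
  proof -
    have "\<forall>a s'. \<exists>\<pi>. validp Smax Av \<pi> \<and> Rf Smax \<delta> \<sigma> (pure \<pi>) (h @ [(s, a)]) s' k (T i) < W a s' $ i + e"
    proof (intro allI)
      fix a s'
      have "Inf (RS a s' i) < W a s' $ i + e" using e unfolding W_def by simp
      from cInf_lessD[OF RSne this] show "\<exists>\<pi>. validp Smax Av \<pi> \<and> Rf Smax \<delta> \<sigma> (pure \<pi>) (h @ [(s, a)]) s' k (T i) < W a s' $ i + e"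
        unfolding RS_def by blast
    qed
    then show ?thesis by metis
  qed
  define z where "z a = (\<chi> i. if s \<in> T i then 1 else Sg \<delta> s a (W a) $ i)" for a
  have nn: "\<forall>s'. \<forall>u\<in>?L s'. \<forall>i. 0 \<le> u $ i" using good_nonneg[OF GL] by blast
  have zF: "z a \<in> f_act \<delta> T ?L s a" for a
  proof (subst f_act_iff[OF nn], intro conjI exI[of _ "W a"])
    have "0 \<le> Sg \<delta> s a (W a) $ i" "Sg \<delta> s a (W a) $ i \<le> 1" for i
      using W0 W1 by (auto intro: Sg_nonneg Sg_le1)
    then show "inbox (z a)" unfolding inbox_def z_def by auto
    show "\<forall>s'. W a s' \<in> ?L s'" using WL by blast
    show "\<forall>i. if s \<in> T i then Sg \<delta> s a (W a) $ i \<le> z a $ i else z a $ i = Sg \<delta> s a (W a) $ i"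
      using W1 by (auto simp: z_def intro: Sg_le1)
  qed
  show ?case
  proof (cases "s \<in> Smax")
    case True
    let ?p = "\<sigma> h s"
    have setp: "set_pmf ?p \<subseteq> Av s" using \<sigma>v True unfolding is_strategy_def by auto
    have bound: "y $ i \<le> (\<Sum>a\<in>UNIV. pmf ?p a * Sg \<delta> s a (W a) $ i)" if nT: "s \<notin> T i" for i
    proof (rule field_le_epsilon)
      fix e :: real assume e: "0 < e"
      obtain PP where PPv: "\<And>a s'. validp Smax Av (PP a s')"
        and PPl: "\<And>a s'. Rf Smax \<delta> \<sigma> (pure (PP a s')) (h @ [(s, a)]) s' k (T i) < W a s' $ i + e"
        using key[OF e, of i] by blast
      define \<pi> where "\<pi> = glue h s PP (pdef Av) (pdef Av h s)"
      have \<pi>v: "validp Smax Av \<pi>" unfolding \<pi>_def using PPv pv True by (intro glue_validp) auto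
      have st: "stc Smax \<sigma> (pure \<pi>) h s = ?p" using True unfolding stc_def by simp
      have "y $ i \<le> Rf Smax \<delta> \<sigma> (pure \<pi>) h s (Suc k) (T i)" using Suc.prems(2) \<pi>v by blast
      also have "\<dots> = (\<Sum>a\<in>UNIV. pmf ?p a * (\<Sum>s'\<in>UNIV. pmf (\<delta> s a) s' * Rf Smax \<delta> \<sigma> (pure (PP a s')) (h @ [(s, a)]) s' k (T i)))"
        using nT st unfolding \<pi>_def by (simp add: Rf_glue_pure)
      also have "\<dots> \<le> (\<Sum>a\<in>UNIV. pmf ?p a * (\<Sum>s'\<in>UNIV. pmf (\<delta> s a) s' * (W a s' $ i + e)))"
        using PPl by (intro sum_mono mult_left_mono) (auto intro: less_imp_le)
      also have "\<dots> = (\<Sum>a\<in>UNIV. pmf ?p a * Sg \<delta> s a (W a) $ i) + e"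
        by (simp add: sum_eps Sg_comp)
      finally show "y $ i \<le> (\<Sum>a\<in>UNIV. pmf ?p a * Sg \<delta> s a (W a) $ i) + e" .
    qed
    note rep = hull_rep[where Av=Av and s=s, OF GL Av[of s]]
    define u where "u = (\<Sum>a\<in>Av s. pmf ?p a *\<^sub>R z a)"
    have sum1: "(\<Sum>a\<in>Av s. pmf ?p a) = 1" using setp by (intro sum_pmf_eq_1) auto
    have uB: "u \<in> bellman Smax Av \<delta> T ?L s"
      unfolding bellman_def rep u_def using True sum1 zF
      by (auto intro!: exI[of _ "pmf (\<sigma> h s)"] exI[of _ z])
    have "y $ i \<le> u $ i" for i
    proof (cases "s \<in> T i")
      case True
      then show ?thesis using y1[of i] sum1 unfolding u_def z_def by simp
    next
      case False
      have "(\<Sum>a\<in>UNIV. pmf ?p a * Sg \<delta> s a (W a) $ i) = (\<Sum>a\<in>Av s. pmf ?p a * Sg \<delta> s a (W a) $ i)"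
        using setp by (intro sum.mono_neutral_right) (auto simp: set_pmf_iff)
      then show ?thesis using bound[OF False] False unfolding u_def z_def by simp
    qed
    then have "y \<in> bellman Smax Av \<delta> T ?L s"
      using GB uB Suc.prems(1) unfolding good_def dcl_def bvi_L_Suc by blast
    then show ?thesis unfolding bvi_L_Suc[of _ _ _ _ "Suc k"] .
  next
    case False
    have yF: "y \<in> f_act \<delta> T ?L s a" if aA: "a \<in> Av s" for a
    proof -
      have bound: "y $ i \<le> Sg \<delta> s a (W a) $ i" if nT: "s \<notin> T i" for i
      proof (rule field_le_epsilon)
        fix e :: real assume e: "0 < e"
        obtain PP where PPv: "\<And>a s'. validp Smax Av (PP a s')"
          and PPl: "\<And>a s'. Rf Smax \<delta> \<sigma> (pure (PP a s')) (h @ [(s, a)]) s' k (T i) < W a s' $ i + e"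
          using key[OF e, of i] by blast
        define \<pi> where "\<pi> = glue h s PP (pdef Av) a"
        have \<pi>v: "validp Smax Av \<pi>" unfolding \<pi>_def using PPv pv aA by (intro glue_validp) auto
        have st: "stc Smax \<sigma> (pure \<pi>) h s = return_pmf a" using False unfolding stc_def pure_def \<pi>_def
          by (simp add: glue_here)
        have "y $ i \<le> Rf Smax \<delta> \<sigma> (pure \<pi>) h s (Suc k) (T i)" using Suc.prems(2) \<pi>v by blast
        also have "\<dots> = (\<Sum>a'\<in>UNIV. pmf (return_pmf a) a' * (\<Sum>s'\<in>UNIV. pmf (\<delta> s a') s' * Rf Smax \<delta> \<sigma> (pure (PP a' s')) (h @ [(s, a')]) s' k (T i)))"
          using nT st unfolding \<pi>_def by (simp add: Rf_glue_pure)
        also have "\<dots> = (\<Sum>s'\<in>UNIV. pmf (\<delta> s a) s' * Rf Smax \<delta> \<sigma> (pure (PP a s')) (h @ [(s, a)]) s' k (T i))"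
          by (simp add: pmf_return indicator_def)
        also have "\<dots> \<le> (\<Sum>s'\<in>UNIV. pmf (\<delta> s a) s' * (W a s' $ i + e))"
          using PPl by (intro sum_mono mult_left_mono) (auto intro: less_imp_le)
        also have "\<dots> = Sg \<delta> s a (W a) $ i + e"
          by (simp add: sum_eps Sg_comp)
        finally show "y $ i \<le> Sg \<delta> s a (W a) $ i + e" .
      qed
      have "y $ i \<le> z a $ i" for i
        using bound[of i] y1[of i] unfolding z_def by auto
      then show ?thesis using good_f_act(4)[OF GL, of \<delta> T s a] zF[of a] Suc.prems(1) unfolding dcl_def by blast
    qed
    then show ?thesis using False unfolding bvi_L_Suc[of _ _ _ _ "Suc k"] bellman_def by auto
  qed
qed

definition resk :: "nat \<Rightarrow> (('s \<times> 'a) list \<Rightarrow> 's \<Rightarrow> 'a) \<Rightarrow> (('s \<times> 'a) list \<times> 's) \<Rightarrow> 'a" where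
  "resk k f = restrict (\<lambda>(r, t). f r t) {(r, t). length r \<le> k}"

definition selk :: "(nat \<Rightarrow> ('s \<times> 'a) list \<Rightarrow> 's \<Rightarrow> 'a) \<Rightarrow> nat \<Rightarrow> nat set \<Rightarrow> nat set" where
  "selk \<pi>s k B = (SOME B'. B' \<subseteq> B \<and> infinite B' \<and> (\<forall>m\<in>B'. \<forall>m'\<in>B'. resk k (\<pi>s m) = resk k (\<pi>s m')))"

primrec Iseq :: "(nat \<Rightarrow> ('s \<times> 'a) list \<Rightarrow> 's \<Rightarrow> 'a) \<Rightarrow> nat \<Rightarrow> nat set" where
  "Iseq \<pi>s 0 = selk \<pi>s 0 UNIV"
| "Iseq \<pi>s (Suc k) = selk \<pi>s (Suc k) (Iseq \<pi>s k)"

lemma finite_resk_range: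
  "finite (range (resk k :: (('s::finite \<times> 'a::finite) list \<Rightarrow> 's \<Rightarrow> 'a) \<Rightarrow> _))"
proof -
  let ?D = "{(r, t). length r \<le> k} :: (('s \<times> 'a) list \<times> 's) set"
  have "?D = {r. set r \<subseteq> UNIV \<and> length r \<le> k} \<times> UNIV" by auto
  then have fD: "finite ?D" using finite_lists_length_le[of "UNIV :: ('s \<times> 'a) set" k] by simp
  have "range (resk k :: (('s \<times> 'a) list \<Rightarrow> 's \<Rightarrow> 'a) \<Rightarrow> _) \<subseteq> PiE ?D (\<lambda>_. UNIV)"
    unfolding resk_def by (auto split: if_splits)
  moreover have "finite (PiE ?D (\<lambda>_. UNIV :: 'a set))" using fD by (intro finite_PiE) auto
  ultimately show ?thesis by (rule finite_subset)
qed

lemma selk_prop: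
  fixes \<pi>s :: "nat \<Rightarrow> ('s::finite \<times> 'a::finite) list \<Rightarrow> 's \<Rightarrow> 'a"
  assumes "infinite B"
  shows "selk \<pi>s k B \<subseteq> B \<and> infinite (selk \<pi>s k B) \<and>
    (\<forall>m\<in>selk \<pi>s k B. \<forall>m'\<in>selk \<pi>s k B. resk k (\<pi>s m) = resk k (\<pi>s m'))"
proof -
  have "finite ((\<lambda>m. resk k (\<pi>s m)) ` B)"
    by (rule finite_subset[OF _ finite_resk_range[of k]]) auto
  from pigeonhole_infinite[OF assms this] obtain a0 where "a0 \<in> B"
    and inf: "infinite {a\<in>B. resk k (\<pi>s a) = resk k (\<pi>s a0)}" by blast
  then have "\<exists>B'. B' \<subseteq> B \<and> infinite B' \<and> (\<forall>m\<in>B'. \<forall>m'\<in>B'. resk k (\<pi>s m) = resk k (\<pi>s m'))"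
    by (intro exI[of _ "{a\<in>B. resk k (\<pi>s a) = resk k (\<pi>s a0)}"]) auto
  then show ?thesis unfolding selk_def by (rule someI_ex)
qed

lemma Iseq_prop:
  fixes \<pi>s :: "nat \<Rightarrow> ('s::finite \<times> 'a::finite) list \<Rightarrow> 's \<Rightarrow> 'a"
  shows "infinite (Iseq \<pi>s k) \<and> (\<forall>m\<in>Iseq \<pi>s k. \<forall>m'\<in>Iseq \<pi>s k. resk k (\<pi>s m) = resk k (\<pi>s m'))"
proof (induction k)
  case 0
  have "infinite (UNIV :: nat set)" by simp
  from selk_prop[OF this, of \<pi>s 0] show ?case unfolding Iseq.simps by blast
next
  case (Suc k)
  then have "infinite (Iseq \<pi>s k)" by blast
  from selk_prop[OF this, of \<pi>s "Suc k"] show ?case unfolding Iseq.simps by blast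
qed

lemma Iseq_mono:
  fixes \<pi>s :: "nat \<Rightarrow> ('s::finite \<times> 'a::finite) list \<Rightarrow> 's \<Rightarrow> 'a"
  shows "j \<le> k \<Longrightarrow> Iseq \<pi>s k \<subseteq> Iseq \<pi>s j"
proof (induction k)
  case (Suc k)
  have "infinite (Iseq \<pi>s k)" using Iseq_prop[of \<pi>s k] by blast
  from selk_prop[OF this, of \<pi>s "Suc k"]
  have "Iseq \<pi>s (Suc k) \<subseteq> Iseq \<pi>s k" unfolding Iseq.simps by blast
  then show ?case using Suc by (auto simp: le_Suc_eq)
qed simp

lemma koenig:
  fixes \<pi>s :: "nat \<Rightarrow> ('s::finite \<times> 'a::finite) list \<Rightarrow> 's \<Rightarrow> 'a"
  assumes v: "\<And>m. validp Smax Av (\<pi>s m)"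
  shows "\<exists>\<pi>. validp Smax Av \<pi> \<and> (\<forall>k M. \<exists>m\<ge>M. \<forall>r t. length r \<le> k \<longrightarrow> \<pi>s m r t = \<pi> r t)"
proof -
  define mm where "mm j = (SOME m. m \<in> Iseq \<pi>s j)" for j
  have mm: "mm j \<in> Iseq \<pi>s j" for j
  proof -
    have "Iseq \<pi>s j \<noteq> {}" using Iseq_prop[of \<pi>s j] by auto
    then show ?thesis unfolding mm_def by (simp add: some_in_eq)
  qed
  define \<pi> where "\<pi> r t = \<pi>s (mm (length r)) r t" for r t
  have "validp Smax Av \<pi>" using v unfolding validp_def \<pi>_def by blast
  moreover have "\<exists>m\<ge>M. \<forall>r t. length r \<le> k \<longrightarrow> \<pi>s m r t = \<pi> r t" for k M
  proof -
    have "infinite (Iseq \<pi>s k)" using Iseq_prop by blast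
    then obtain m where m: "m \<ge> M" "m \<in> Iseq \<pi>s k" unfolding infinite_nat_iff_unbounded_le by blast
    have "\<pi>s m r t = \<pi> r t" if "length r \<le> k" for r t
    proof -
      let ?j = "length r"
      have "m \<in> Iseq \<pi>s ?j" using Iseq_mono[OF that] m(2) by blast
      then have "resk ?j (\<pi>s m) = resk ?j (\<pi>s (mm ?j))" using Iseq_prop[of \<pi>s ?j] mm by blast
      then have "resk ?j (\<pi>s m) (r, t) = resk ?j (\<pi>s (mm ?j)) (r, t)" by simp
      then show ?thesis unfolding resk_def \<pi>_def by simp
    qed
    then show ?thesis using m by blast
  qed
  ultimately show ?thesis by blast
qed

lemma claimC:
  fixes \<delta> :: "'s::finite \<Rightarrow> 'a::finite \<Rightarrow> 's pmf" and T :: "'n::finite \<Rightarrow> 's set"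
  assumes ach: "\<forall>\<tau>. is_strategy Av (-Smax) \<tau> \<longrightarrow> (\<forall>i. x $ i \<le> reach_prob Smax \<delta> \<sigma> \<tau> s (T i))"
    and y: "\<forall>i. y $ i = 0 \<or> y $ i < x $ i"
  shows "\<exists>k. \<forall>\<pi>. validp Smax Av \<pi> \<longrightarrow> (\<forall>i. y $ i \<le> Rf Smax \<delta> \<sigma> (pure \<pi>) [] s k (T i))"
proof -
  have "\<exists>k. \<forall>\<pi>. validp Smax Av \<pi> \<longrightarrow> y $ i \<le> Rf Smax \<delta> \<sigma> (pure \<pi>) [] s k (T i)" for i
  proof (cases "y $ i = 0")
    case True
    then show ?thesis by (auto intro: Rf_nonneg)
  next
    case False
    then have yx: "y $ i < x $ i" using y by auto
    show ?thesis
    proof (rule ccontr)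
      assume "\<not> ?thesis"
      then have "\<forall>k. \<exists>\<pi>. validp Smax Av \<pi> \<and> Rf Smax \<delta> \<sigma> (pure \<pi>) [] s k (T i) < y $ i"
        by (auto simp: not_le)
      then obtain \<pi>s where \<pi>s: "\<And>k. validp Smax Av (\<pi>s k)" "\<And>k. Rf Smax \<delta> \<sigma> (pure (\<pi>s k)) [] s k (T i) < y $ i"
        by metis
      obtain \<pi> where \<pi>v: "validp Smax Av \<pi>" and ag: "\<And>k M. \<exists>m\<ge>M. \<forall>r t. length r \<le> k \<longrightarrow> \<pi>s m r t = \<pi> r t"
        using koenig[of Smax Av \<pi>s, OF \<pi>s(1)] by blast
      have le: "Rf Smax \<delta> \<sigma> (pure \<pi>) [] s k (T i) \<le> y $ i" for k
      proof -
        obtain m where m: "m \<ge> k" "\<forall>r t. length r \<le> k \<longrightarrow> \<pi>s m r t = \<pi> r t" using ag by blast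
        have "Rf Smax \<delta> \<sigma> (pure \<pi>) [] s k (T i) = Rf Smax \<delta> \<sigma> (pure (\<pi>s m)) [] s k (T i)"
          by (rule Rf_local) (use m(2) in \<open>simp add: stc_def pure_def\<close>)
        also have "\<dots> \<le> Rf Smax \<delta> \<sigma> (pure (\<pi>s m)) [] s m (T i)" using m(1) by (rule Rf_mono)
        also have "\<dots> \<le> y $ i" using \<pi>s(2)[of m] by simp
        finally show ?thesis .
      qed
      have "reach_prob Smax \<delta> \<sigma> (pure \<pi>) s (T i) \<le> y $ i"
        using reach_tendsto[of Smax \<delta> \<sigma> "pure \<pi>" s "T i"] le by (intro LIMSEQ_le_const2) auto
      moreover have "x $ i \<le> reach_prob Smax \<delta> \<sigma> (pure \<pi>) s (T i)"
        using ach pure_valid[OF \<pi>v] by blast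
      ultimately show False using yx by simp
    qed
  qed
  then obtain kk where kk: "\<And>i \<pi>. validp Smax Av \<pi> \<Longrightarrow> y $ i \<le> Rf Smax \<delta> \<sigma> (pure \<pi>) [] s (kk i) (T i)"
    by metis
  define K where "K = Max (range kk)"
  have "kk i \<le> K" for i unfolding K_def by (rule Max_ge) auto
  then have "y $ i \<le> Rf Smax \<delta> \<sigma> (pure \<pi>) [] s K (T i)" if "validp Smax Av \<pi>" for \<pi> i
    using kk[OF that, of i] Rf_mono[of "kk i" K] by (meson order_trans)
  then show ?thesis by blast
qed

lemma direction_scale:
  fixes x :: "real^'n::finite"
  assumes "0 < c"
  shows "direction (c *\<^sub>R x) = direction x"
proof -
  have "\<exists>c''. c' *\<^sub>R c *\<^sub>R x = c'' *\<^sub>R x \<and> 0 < c''" if "0 < c'" for c'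
    using that assms by (intro exI[of _ "c' * c"]) auto
  moreover have "\<exists>c'. c'' *\<^sub>R x = c' *\<^sub>R c *\<^sub>R x \<and> 0 < c'" if "0 < c''" for c''
    using that assms by (intro exI[of _ "c'' / c"]) auto
  ultimately show ?thesis unfolding direction_def by blast
qed

lemma along_nonneg:
  assumes "bdd_above {norm x | x. x \<in> X \<and> direction x = d}"
  shows "0 \<le> along X d"
proof (cases "{norm x | x. x \<in> X \<and> direction x = d} = {}")
  case True
  then show ?thesis unfolding along_def by simp
next
  case False
  then obtain x where x: "x \<in> X" "direction x = d" by blast
  have "norm x \<le> Sup {norm x | x. x \<in> X \<and> direction x = d}"
    using x assms by (intro cSup_upper) auto
  then show ?thesis using False unfolding along_def Let_def by (auto intro: order_trans[OF norm_ge_zero])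
qed

theorem main_result:
  fixes Smax :: "'s::finite set"
    and Av :: "'s \<Rightarrow> 'a::finite set"
    and \<delta> :: "'s \<Rightarrow> 'a \<Rightarrow> 's pmf"
    and T :: "'n::finite \<Rightarrow> 's set"
  assumes Av: "\<And>s. Av s \<noteq> {}"
  shows "\<forall>s. \<forall>d\<in>Dirs. along (L_inf Smax Av \<delta> T s) d = along (achievable Smax Av \<delta> T s) d"
proof (intro allI ballI)
  fix s and d :: "(real^'n) set"
  let ?A = "achievable Smax Av \<delta> T s"
  let ?LI = "L_inf Smax Av \<delta> T s"
  let ?NA = "{norm x | x. x \<in> ?A \<and> direction x = d}"
  let ?NL = "{norm x | x. x \<in> ?LI \<and> direction x = d}"
  have pv: "validp Smax Av (pdef Av)" by (rule pdef_valid[OF Av])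
  have LA: "?LI \<subseteq> ?A"
  proof
    fix v assume "v \<in> ?LI"
    then obtain j where vj: "v \<in> bvi_L Smax Av \<delta> T j s" unfolding L_inf_def by blast
    obtain \<sigma> where \<sigma>v: "is_strategy Av Smax \<sigma>"
      and \<sigma>g: "\<forall>\<tau>. is_strategy Av (-Smax) \<tau> \<longrightarrow> (\<forall>i. v $ i \<le> Rf Smax \<delta> \<sigma> \<tau> [] s j (T i))"
      using claimA[OF Av vj] by blast
    have "0 \<le> v $ i" for i using good_nonneg[OF good_bvi_L[OF Av] vj] .
    moreover have "v $ i \<le> reach_prob Smax \<delta> \<sigma> \<tau> s (T i)" if "is_strategy Av (-Smax) \<tau>" for \<tau> i
      using \<sigma>g that Rf_le_reach[of Smax \<delta> \<sigma> \<tau> s j "T i"] by (meson order_trans)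
    ultimately show "v \<in> ?A" unfolding achievable_def using \<sigma>v by blast
  qed
  have normA: "norm x \<le> real CARD('n)" if xA0: "x \<in> ?A" for x
  proof -
    obtain \<sigma> where "\<forall>\<tau>. is_strategy Av (-Smax) \<tau> \<longrightarrow> (\<forall>i. x $ i \<le> reach_prob Smax \<delta> \<sigma> \<tau> s (T i))"
      and x0: "\<forall>i. 0 \<le> x $ i" using xA0 unfolding achievable_def by blast
    then have "x $ i \<le> reach_prob Smax \<delta> \<sigma> (pure (pdef Av)) s (T i)" for i using pure_valid[OF pv] by blast
    then have x1: "x $ i \<le> 1" for i using reach_le1[of Smax \<delta> \<sigma> "pure (pdef Av)" s "T i"] by (meson order_trans)
    have "norm x \<le> (\<Sum>i\<in>UNIV. \<bar>x $ i\<bar>)" by (rule norm_le_l1_cart)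
    also have "\<dots> \<le> (\<Sum>i\<in>(UNIV :: 'n set). 1)" using x0 x1 by (intro sum_mono) auto
    finally show ?thesis by simp
  qed
  have bddA: "bdd_above ?NA" using normA by (intro bdd_aboveI[of _ "real CARD('n)"]) auto
  have bddL: "bdd_above ?NL" using normA LA by (intro bdd_aboveI[of _ "real CARD('n)"]) auto
  have A0: "0 \<le> along ?A d" by (rule along_nonneg[OF bddA])
  have L0: "0 \<le> along ?LI d" by (rule along_nonneg[OF bddL])
  have key: "norm x \<le> along ?LI d" if xA: "x \<in> ?A" and xd: "direction x = d" for x
  proof (rule ccontr)
    let ?B = "along ?LI d"
    assume "\<not> norm x \<le> ?B"
    then have gt: "?B < norm x" by simp
    then have nx: "0 < norm x" using L0 by linarith
    define e where "e = (norm x - ?B) / (2 * norm x)"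
    have e0: "0 < e" unfolding e_def using gt nx by simp
    have e1: "e < 1" unfolding e_def using gt nx L0 by (simp add: field_simps)
    define y where "y = (1 - e) *\<^sub>R x"
    obtain \<sigma> where \<sigma>v: "is_strategy Av Smax \<sigma>"
      and ach: "\<forall>\<tau>. is_strategy Av (-Smax) \<tau> \<longrightarrow> (\<forall>i. x $ i \<le> reach_prob Smax \<delta> \<sigma> \<tau> s (T i))"
      and x0: "\<forall>i. 0 \<le> x $ i" using xA unfolding achievable_def by blast
    have y0: "\<forall>i. 0 \<le> y $ i" using x0 e1 unfolding y_def by simp
    have yx: "\<forall>i. y $ i = 0 \<or> y $ i < x $ i"
    proof
      fix i
      show "y $ i = 0 \<or> y $ i < x $ i"
      proof (cases "x $ i = 0")
        case False
        then have "0 < x $ i" using x0 by (simp add: order_le_neq_trans)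
        then show ?thesis using e0 unfolding y_def by (simp add: algebra_simps)
      qed (simp add: y_def)
    qed
    obtain k where k: "\<forall>\<pi>. validp Smax Av \<pi> \<longrightarrow> (\<forall>i. y $ i \<le> Rf Smax \<delta> \<sigma> (pure \<pi>) [] s k (T i))"
      using claimC[OF ach yx] by blast
    have "y \<in> bvi_L Smax Av \<delta> T (Suc k) s" using claimB[OF Av \<sigma>v y0 k] .
    then have yL: "y \<in> ?LI" unfolding L_inf_def by blast
    have "direction y = d" unfolding y_def using direction_scale[of "1 - e" x] e1 xd by simp
    then have "norm y \<in> ?NL" using yL by blast
    then have "norm y \<le> ?B" unfolding along_def Let_def using bddL
      by (auto intro: cSup_upper)
    moreover have "norm y = (1 - e) * norm x" unfolding y_def using e1 by simp
    moreover have "(1 - e) * norm x = norm x - (norm x - ?B) / 2" unfolding e_def using nx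
      by (simp add: field_simps)
    ultimately show False using gt by (simp add: field_simps)
  qed
  have le1: "along ?LI d \<le> along ?A d"
  proof (cases "?NL = {}")
    case True
    then show ?thesis using A0 unfolding along_def by simp
  next
    case False
    then have F2: "?NA \<noteq> {}" using LA by blast
    have eL: "along ?LI d = Sup ?NL" unfolding along_def Let_def by (rule if_not_P[OF False])
    have eA: "along ?A d = Sup ?NA" unfolding along_def Let_def by (rule if_not_P[OF F2])
    have "Sup ?NL \<le> Sup ?NA" using False bddA LA by (intro cSup_subset_mono) auto
    then show ?thesis unfolding eL eA .
  qed
  have le2: "along ?A d \<le> along ?LI d"
  proof (cases "?NA = {}")
    case True
    then show ?thesis using L0 unfolding along_def by simp
  next
    case False
    have eA: "along ?A d = Sup ?NA" unfolding along_def Let_def by (rule if_not_P[OF False])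
    have "Sup ?NA \<le> along ?LI d" using False key by (intro cSup_least) auto
    then show ?thesis unfolding eA .
  qed
  show "along ?LI d = along ?A d" using le1 le2 by simp
qed

theorem proposition5p2:
  fixes Smax :: "'s::finite set"
    and Av :: "'s \<Rightarrow> 'a::finite set"
    and \<delta> :: "'s \<Rightarrow> 'a \<Rightarrow> 's pmf"
    and T :: "'n::finite \<Rightarrow> 's set"
  assumes "\<And>s. Av s \<noteq> {}"
  shows "\<forall>s. \<forall>d\<in>Dirs. along (L_inf Smax Av \<delta> T s) d = along (achievable Smax Av \<delta> T s) d"
  using main_result[OF assms] .

end
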